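(* There is an algorithm that, given a finite nonempty set $V$ and a partial function $\tilde x$ from a subset $\operatorname{dom}(\tilde x)\subseteq P_V$ to $\{0,1\}$, decides whether $X_V[\tilde x]\neq\emptyset$ in time polynomial in $|V|$.
   Context: For a finite nonempty set $V$, let $P_V=\{pq\in V^2\mid p\neq q\}$ (ordered pairs of distinct elements). Let $X_V$ be the set of all $x\in\{0,1\}^{P_V}$ such that $x_{pq}+x_{qr}-x_{pr}\le 1$ for all pairwise distinct $p,q,r\in V$. For a partial function $\tilde x$ (a map from some $\operatorname{dom}(\tilde x)\subseteq P_V$ to $\{0,1\}$), the set of completions is $X_V[\tilde x]=\{x\in X_V\mid x_{pq}=\tilde x_{pq}\text{ for all }pq\in\operatorname{dom}(\tilde x)\}$. *)

theory Defs
  imports Main "HOL-Library.FuncSet"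
begin

definition P :: "'a set \<Rightarrow> ('a \<times> 'a) set" where
  "P V = {(p, q). p \<in> V \<and> q \<in> V \<and> p \<noteq> q}"

definition X :: "'a set \<Rightarrow> (('a \<times> 'a) \<Rightarrow> nat) set" where
  "X V = {x \<in> P V \<rightarrow>\<^sub>E {0, 1}.
     \<forall>p\<in>V. \<forall>q\<in>V. \<forall>r\<in>V. p \<noteq> q \<and> q \<noteq> r \<and> p \<noteq> r \<longrightarrow>
       int (x (p, q)) + int (x (q, r)) - int (x (p, r)) \<le> 1}"

definition completions :: "'a set \<Rightarrow> (('a \<times> 'a) \<rightharpoonup> nat) \<Rightarrow> (('a \<times> 'a) \<Rightarrow> nat) set" where
  "completions V xt = {x \<in> X V. \<forall>pq \<in> dom xt. x pq = the (xt pq)}"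

datatype instr =
    Const nat nat
  | Add nat nat nat
  | Sub nat nat nat
  | Load nat nat
  | Store nat nat
  | Jz nat nat
  | Jmp nat
  | Halt

type_synonym config = "nat \<times> (nat \<Rightarrow> nat)"

definition halted :: "instr list \<Rightarrow> config \<Rightarrow> bool" where
  "halted prog s = (fst s \<ge> length prog \<or> prog ! fst s = Halt)"

fun exec :: "instr \<Rightarrow> config \<Rightarrow> config" where
  "exec (Const r c) (pc, M) = (Suc pc, M(r := c))"
| "exec (Add r a b) (pc, M) = (Suc pc, M(r := M a + M b))"
| "exec (Sub r a b) (pc, M) = (Suc pc, M(r := M a - M b))"
| "exec (Load r a) (pc, M) = (Suc pc, M(r := M (M a)))"
| "exec (Store a b) (pc, M) = (Suc pc, M(M a := M b))"
| "exec (Jz r l) (pc, M) = (if M r = 0 then (l, M) else (Suc pc, M))"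
| "exec (Jmp l) (pc, M) = (l, M)"
| "exec Halt (pc, M) = (pc, M)"

definition step :: "instr list \<Rightarrow> config \<Rightarrow> config" where
  "step prog s = (if halted prog s then s else exec (prog ! fst s) s)"

definition run :: "instr list \<Rightarrow> nat \<Rightarrow> (nat \<Rightarrow> nat) \<Rightarrow> config" where
  "run prog t M = (step prog ^^ t) (0, M)"

text \<open>V is presented via an enumeration e : {0..<n} -> V. Memory cell 0 holds n;
  cell 1 + i*n + j holds 0 if (e i, e j) is not in dom xt, and v+1 if xt (e i, e j) = Some v.
  All other cells hold 0.\<close>
definition input_mem :: "nat \<Rightarrow> (nat \<Rightarrow> 'a) \<Rightarrow> (('a \<times> 'a) \<rightharpoonup> nat) \<Rightarrow> nat \<Rightarrow> nat" where
  "input_mem n e xt a =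
     (if a = 0 then n
      else if a \<le> n * n then
        (case xt (e ((a - 1) div n), e ((a - 1) mod n)) of None \<Rightarrow> 0 | Some v \<Rightarrow> Suc v)
      else 0)"

end

theory Submission
  imports Defs
begin

definition wp :: "nat set \<Rightarrow> instr list \<Rightarrow> config \<Rightarrow> (nat \<Rightarrow> config \<Rightarrow> bool) \<Rightarrow> bool" where
  "wp S pr s Q \<longleftrightarrow> (\<exists>t. fst ((step pr ^^ t) s) \<in> S \<and> Q t ((step pr ^^ t) s))"

lemma funpow_Suc_app: "(f ^^ Suc t) x = (f ^^ t) (f x)"
  by (simp only: funpow_Suc_right o_apply)

lemma wp_done: "fst s \<in> S \<Longrightarrow> Q 0 s \<Longrightarrow> wp S pr s Q"
  unfolding wp_def by (rule exI[of _ 0]) simp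

lemma wp_step: "wp S pr (step pr s) (\<lambda>t. Q (Suc t)) \<Longrightarrow> wp S pr s Q"
  unfolding wp_def using funpow_Suc_app by metis

lemma wp_unfold: "pc \<notin> S \<Longrightarrow> wp S pr (pc, M) Q = wp S pr (step pr (pc, M)) (\<lambda>t. Q (Suc t))"
proof
  assume pc: "pc \<notin> S" and "wp S pr (pc, M) Q"
  then obtain t where t: "fst ((step pr ^^ t) (pc, M)) \<in> S" "Q t ((step pr ^^ t) (pc, M))"
    unfolding wp_def by blast
  show "wp S pr (step pr (pc, M)) (\<lambda>t. Q (Suc t))"
  proof (cases t)
    case 0
    then show ?thesis using t pc by simp
  next
    case (Suc t')
    then show ?thesis using t unfolding wp_def by (intro exI[of _ t']) (simp only: funpow_Suc_app)
  qed
next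
  assume "wp S pr (step pr (pc, M)) (\<lambda>t. Q (Suc t))" then show "wp S pr (pc, M) Q" by (rule wp_step)
qed

lemma wp_mono: "wp S pr s Q \<Longrightarrow> (\<And>t s. Q t s \<Longrightarrow> Q' t s) \<Longrightarrow> wp S pr s Q'"
  unfolding wp_def by blast

lemma wp_then: "wp S pr s Pr \<Longrightarrow> (\<And>t s'. Pr t s' \<Longrightarrow> wp S pr s' (\<lambda>t2. Q (t + t2))) \<Longrightarrow> wp S pr s Q"
  unfolding wp_def
proof -
  assume a: "\<exists>t. fst ((step pr ^^ t) s) \<in> S \<and> Pr t ((step pr ^^ t) s)"
    and b: "\<And>t s'. Pr t s' \<Longrightarrow> \<exists>t2. fst ((step pr ^^ t2) s') \<in> S \<and> Q (t + t2) ((step pr ^^ t2) s')"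
  from a obtain t where "Pr t ((step pr ^^ t) s)" by blast
  from b[OF this] obtain t2 where "fst ((step pr ^^ t2) ((step pr ^^ t) s)) \<in> S \<and> Q (t + t2) ((step pr ^^ t2) ((step pr ^^ t) s))" by blast
  then show "\<exists>t. fst ((step pr ^^ t) s) \<in> S \<and> Q t ((step pr ^^ t) s)" by (metis funpow_add o_apply add.commute)
qed

lemma wp_loop:
  assumes body: "\<And>c M. c < N \<Longrightarrow> Inv c M \<Longrightarrow>
      wp S pr (L, M) (\<lambda>t s. t \<le> T \<and> fst s = L \<and> Inv (Suc c) (snd s))"
    and ex: "\<And>M. Inv N M \<Longrightarrow> wp S pr (L, M) (\<lambda>t s. t \<le> T' \<and> Post s)"
  shows "c \<le> N \<Longrightarrow> Inv c M \<Longrightarrow> wp S pr (L, M) (\<lambda>t s. t \<le> (N - c) * T + T' \<and> Post s)"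
proof (induction "N - c" arbitrary: c M)
  case 0
  then have "c = N" by simp
  then show ?case using ex[of M] 0 by (auto elim!: wp_mono)
next
  case (Suc r)
  then have cN: "c < N" by simp
  show ?case
  proof (rule wp_then[OF body[OF cN Suc.prems(2)]])
    fix t s' assume a: "t \<le> T \<and> fst s' = L \<and> Inv (Suc c) (snd s')"
    have s': "s' = (L, snd s')" using a by (cases s') auto
    have w: "wp S pr (L, snd s') (\<lambda>t s. t \<le> (N - Suc c) * T + T' \<and> Post s)"
      using Suc.hyps(1)[of "Suc c" "snd s'"] Suc.hyps(2) cN a by simp
    have e: "N - c = Suc (N - Suc c)" using cN by simp
    show "wp S pr s' (\<lambda>t2 s. t + t2 \<le> (N - c) * T + T' \<and> Post s)"
      apply (subst s')
      apply (rule wp_mono[OF w])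
      using a unfolding e by auto
  qed
qed

lemma halted_step: "halted pr s \<Longrightarrow> step pr s = s"
  by (simp add: step_def)

lemma halted_funpow: "halted pr s \<Longrightarrow> (step pr ^^ m) s = s"
  by (induction m) (auto simp: halted_step)

definition prog :: "instr list" where
  "prog = [Add 1 1 2,
    Add 2 1 1,
    Add 2 2 1,
    Add 1 2 3,
    Add 2 1 1,
    Add 2 2 1,
    Add 1 2 4,
    Add 2 1 1,
    Add 2 2 1,
    Add 1 2 5,
    Const 4 1,
    Const 3 0,
    Add 2 0 3,
    Jz 2 17,
    Add 3 3 0,
    Sub 2 2 4,
    Jmp 13,
    Const 2 0,
    Add 2 2 3,
    Add 3 3 3,
    Const 5 32,
    Add 3 3 5,
    Const 5 5,
    Sub 5 2 5,
    Jz 5 30,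
    Load 5 2,
    Store 3 5,
    Sub 2 2 4,
    Sub 3 3 4,
    Jmp 22,
    Sub 6 3 2,
    Const 7 1,
    Add 8 6 7,
    Const 9 0,
    Store 8 9,
    Const 7 2,
    Add 8 6 7,
    Const 7 53,
    Sub 9 1 7,
    Jz 9 45,
    Const 9 2,
    Store 8 9,
    Const 7 54,
    Sub 1 1 7,
    Jmp 55,
    Const 7 26,
    Sub 9 1 7,
    Jz 9 53,
    Const 9 1,
    Store 8 9,
    Const 7 27,
    Sub 1 1 7,
    Jmp 55,
    Const 9 0,
    Store 8 9,
    Const 7 3,
    Add 8 6 7,
    Const 7 17,
    Sub 9 1 7,
    Jz 9 65,
    Const 9 2,
    Store 8 9,
    Const 7 18,
    Sub 1 1 7,
    Jmp 75,
    Const 7 8,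
    Sub 9 1 7,
    Jz 9 73,
    Const 9 1,
    Store 8 9,
    Const 7 9,
    Sub 1 1 7,
    Jmp 75,
    Const 9 0,
    Store 8 9,
    Const 7 4,
    Add 8 6 7,
    Const 7 5,
    Sub 9 1 7,
    Jz 9 85,
    Const 9 2,
    Store 8 9,
    Const 7 6,
    Sub 1 1 7,
    Jmp 95,
    Const 7 2,
    Sub 9 1 7,
    Jz 9 93,
    Const 9 1,
    Store 8 9,
    Const 7 3,
    Sub 1 1 7,
    Jmp 95,
    Const 9 0,
    Store 8 9,
    Const 7 5,
    Add 8 6 7,
    Const 7 1,
    Sub 9 1 7,
    Jz 9 105,
    Const 9 2,
    Store 8 9,
    Const 7 2,
    Sub 1 1 7,
    Jmp 115,
    Const 7 0,
    Sub 9 1 7,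
    Jz 9 113,
    Const 9 1,
    Store 8 9,
    Const 7 1,
    Sub 1 1 7,
    Jmp 115,
    Const 9 0,
    Store 8 9,
    Const 10 1,
    Const 11 0,
    Add 14 6 10,
    Sub 17 0 11,
    Jz 17 151,
    Const 12 0,
    Add 15 6 10,
    Sub 17 0 12,
    Jz 17 148,
    Const 13 0,
    Sub 17 0 13,
    Jz 17 145,
    Add 16 15 11,
    Load 17 16,
    Sub 17 17 10,
    Jz 17 143,
    Add 16 14 13,
    Load 17 16,
    Sub 17 17 10,
    Jz 17 143,
    Add 16 15 13,
    Load 17 16,
    Sub 18 17 10,
    Jz 18 140,
    Jmp 143,
    Const 18 2,
    Add 17 17 18,
    Store 16 17,
    Add 13 13 10,
    Jmp 125,
    Add 12 12 10,
    Add 15 15 0,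
    Jmp 122,
    Add 11 11 10,
    Add 14 14 0,
    Jmp 118,
    Const 19 1,
    Add 16 6 10,
    Sub 17 14 16,
    Jz 17 162,
    Load 17 16,
    Const 18 2,
    Sub 17 17 18,
    Jz 17 160,
    Const 19 0,
    Add 16 16 10,
    Jmp 153,
    Const 7 0,
    Add 0 19 7,
    Halt]"

lemma prog_nth:
  "prog ! 0 = Add 1 1 2"
  "prog ! 1 = Add 2 1 1"
  "prog ! 2 = Add 2 2 1"
  "prog ! 3 = Add 1 2 3"
  "prog ! 4 = Add 2 1 1"
  "prog ! 5 = Add 2 2 1"
  "prog ! 6 = Add 1 2 4"
  "prog ! 7 = Add 2 1 1"
  "prog ! 8 = Add 2 2 1"
  "prog ! 9 = Add 1 2 5"
  "prog ! 10 = Const 4 1"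
  "prog ! 11 = Const 3 0"
  "prog ! 12 = Add 2 0 3"
  "prog ! 13 = Jz 2 17"
  "prog ! 14 = Add 3 3 0"
  "prog ! 15 = Sub 2 2 4"
  "prog ! 16 = Jmp 13"
  "prog ! 17 = Const 2 0"
  "prog ! 18 = Add 2 2 3"
  "prog ! 19 = Add 3 3 3"
  "prog ! 20 = Const 5 32"
  "prog ! 21 = Add 3 3 5"
  "prog ! 22 = Const 5 5"
  "prog ! 23 = Sub 5 2 5"
  "prog ! 24 = Jz 5 30"
  "prog ! 25 = Load 5 2"
  "prog ! 26 = Store 3 5"
  "prog ! 27 = Sub 2 2 4"
  "prog ! 28 = Sub 3 3 4"
  "prog ! 29 = Jmp 22"
  "prog ! 30 = Sub 6 3 2"
  "prog ! 31 = Const 7 1"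
  "prog ! 32 = Add 8 6 7"
  "prog ! 33 = Const 9 0"
  "prog ! 34 = Store 8 9"
  "prog ! 35 = Const 7 2"
  "prog ! 36 = Add 8 6 7"
  "prog ! 37 = Const 7 53"
  "prog ! 38 = Sub 9 1 7"
  "prog ! 39 = Jz 9 45"
  "prog ! 40 = Const 9 2"
  "prog ! 41 = Store 8 9"
  "prog ! 42 = Const 7 54"
  "prog ! 43 = Sub 1 1 7"
  "prog ! 44 = Jmp 55"
  "prog ! 45 = Const 7 26"
  "prog ! 46 = Sub 9 1 7"
  "prog ! 47 = Jz 9 53"
  "prog ! 48 = Const 9 1"
  "prog ! 49 = Store 8 9"
  "prog ! 50 = Const 7 27"
  "prog ! 51 = Sub 1 1 7"
  "prog ! 52 = Jmp 55"
  "prog ! 53 = Const 9 0"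
  "prog ! 54 = Store 8 9"
  "prog ! 55 = Const 7 3"
  "prog ! 56 = Add 8 6 7"
  "prog ! 57 = Const 7 17"
  "prog ! 58 = Sub 9 1 7"
  "prog ! 59 = Jz 9 65"
  "prog ! 60 = Const 9 2"
  "prog ! 61 = Store 8 9"
  "prog ! 62 = Const 7 18"
  "prog ! 63 = Sub 1 1 7"
  "prog ! 64 = Jmp 75"
  "prog ! 65 = Const 7 8"
  "prog ! 66 = Sub 9 1 7"
  "prog ! 67 = Jz 9 73"
  "prog ! 68 = Const 9 1"
  "prog ! 69 = Store 8 9"
  "prog ! 70 = Const 7 9"
  "prog ! 71 = Sub 1 1 7"
  "prog ! 72 = Jmp 75"
  "prog ! 73 = Const 9 0"
  "prog ! 74 = Store 8 9"
  "prog ! 75 = Const 7 4"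
  "prog ! 76 = Add 8 6 7"
  "prog ! 77 = Const 7 5"
  "prog ! 78 = Sub 9 1 7"
  "prog ! 79 = Jz 9 85"
  "prog ! 80 = Const 9 2"
  "prog ! 81 = Store 8 9"
  "prog ! 82 = Const 7 6"
  "prog ! 83 = Sub 1 1 7"
  "prog ! 84 = Jmp 95"
  "prog ! 85 = Const 7 2"
  "prog ! 86 = Sub 9 1 7"
  "prog ! 87 = Jz 9 93"
  "prog ! 88 = Const 9 1"
  "prog ! 89 = Store 8 9"
  "prog ! 90 = Const 7 3"
  "prog ! 91 = Sub 1 1 7"
  "prog ! 92 = Jmp 95"
  "prog ! 93 = Const 9 0"
  "prog ! 94 = Store 8 9"
  "prog ! 95 = Const 7 5"
  "prog ! 96 = Add 8 6 7"
  "prog ! 97 = Const 7 1"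
  "prog ! 98 = Sub 9 1 7"
  "prog ! 99 = Jz 9 105"
  "prog ! 100 = Const 9 2"
  "prog ! 101 = Store 8 9"
  "prog ! 102 = Const 7 2"
  "prog ! 103 = Sub 1 1 7"
  "prog ! 104 = Jmp 115"
  "prog ! 105 = Const 7 0"
  "prog ! 106 = Sub 9 1 7"
  "prog ! 107 = Jz 9 113"
  "prog ! 108 = Const 9 1"
  "prog ! 109 = Store 8 9"
  "prog ! 110 = Const 7 1"
  "prog ! 111 = Sub 1 1 7"
  "prog ! 112 = Jmp 115"
  "prog ! 113 = Const 9 0"
  "prog ! 114 = Store 8 9"
  "prog ! 115 = Const 10 1"
  "prog ! 116 = Const 11 0"
  "prog ! 117 = Add 14 6 10"
  "prog ! 118 = Sub 17 0 11"
  "prog ! 119 = Jz 17 151"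
  "prog ! 120 = Const 12 0"
  "prog ! 121 = Add 15 6 10"
  "prog ! 122 = Sub 17 0 12"
  "prog ! 123 = Jz 17 148"
  "prog ! 124 = Const 13 0"
  "prog ! 125 = Sub 17 0 13"
  "prog ! 126 = Jz 17 145"
  "prog ! 127 = Add 16 15 11"
  "prog ! 128 = Load 17 16"
  "prog ! 129 = Sub 17 17 10"
  "prog ! 130 = Jz 17 143"
  "prog ! 131 = Add 16 14 13"
  "prog ! 132 = Load 17 16"
  "prog ! 133 = Sub 17 17 10"
  "prog ! 134 = Jz 17 143"
  "prog ! 135 = Add 16 15 13"
  "prog ! 136 = Load 17 16"
  "prog ! 137 = Sub 18 17 10"
  "prog ! 138 = Jz 18 140"
  "prog ! 139 = Jmp 143"
  "prog ! 140 = Const 18 2"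
  "prog ! 141 = Add 17 17 18"
  "prog ! 142 = Store 16 17"
  "prog ! 143 = Add 13 13 10"
  "prog ! 144 = Jmp 125"
  "prog ! 145 = Add 12 12 10"
  "prog ! 146 = Add 15 15 0"
  "prog ! 147 = Jmp 122"
  "prog ! 148 = Add 11 11 10"
  "prog ! 149 = Add 14 14 0"
  "prog ! 150 = Jmp 118"
  "prog ! 151 = Const 19 1"
  "prog ! 152 = Add 16 6 10"
  "prog ! 153 = Sub 17 14 16"
  "prog ! 154 = Jz 17 162"
  "prog ! 155 = Load 17 16"
  "prog ! 156 = Const 18 2"
  "prog ! 157 = Sub 17 17 18"
  "prog ! 158 = Jz 17 160"
  "prog ! 159 = Const 19 0"
  "prog ! 160 = Add 16 16 10"
  "prog ! 161 = Jmp 153"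
  "prog ! 162 = Const 7 0"
  "prog ! 163 = Add 0 19 7"
  "prog ! 164 = Halt"
  "prog ! Suc 0 = Add 2 1 1"
  by (simp_all add: prog_def)

section \<open>Floyd-Warshall style closure\<close>

fun fw :: "(nat \<Rightarrow> nat \<Rightarrow> bool) \<Rightarrow> nat \<Rightarrow> nat \<Rightarrow> nat \<Rightarrow> bool" where
  "fw E 0 i j = E i j"
| "fw E (Suc k) i j = (fw E k i j \<or> (fw E k i k \<and> fw E k k j))"

lemma fw_base: "E i j \<Longrightarrow> fw E k i j"
  by (induction k) auto

lemma fw_Suc_col: "fw E (Suc k) i k = fw E k i k"
  by auto

lemma fw_Suc_row: "fw E (Suc k) k j = fw E k k j"
  by auto

lemma fw_trans: "m < k \<Longrightarrow> fw E k i m \<Longrightarrow> fw E k m j \<Longrightarrow> fw E k i j"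
proof (induction k arbitrary: i j m)
  case 0
  then show ?case by simp
next
  case (Suc k)
  show ?case
  proof (cases "m = k")
    case True
    then show ?thesis using Suc.prems by auto
  next
    case False
    then have mk: "m < k" using Suc.prems by simp
    have IH: "\<And>i j. fw E k i m \<Longrightarrow> fw E k m j \<Longrightarrow> fw E k i j" using Suc.IH mk by blast
    from Suc.prems(2,3) show ?thesis
      by (auto dest: IH)
  qed
qed

definition Amat :: "nat \<Rightarrow> (nat \<Rightarrow> 'a) \<Rightarrow> (('a \<times> 'a) \<rightharpoonup> nat) \<Rightarrow> nat \<Rightarrow> nat \<Rightarrow> nat" where
  "Amat n e xt i j = input_mem n e xt (1 + i * n + j)"

lemma Amat_eq:
  assumes "i < n" "j < n"
  shows "Amat n e xt i j = (case xt (e i, e j) of None \<Rightarrow> 0 | Some v \<Rightarrow> Suc v)"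
proof -
  have le: "1 + i * n + j \<le> n * n"
  proof -
    have "i * n + j < i * n + n" using assms by simp
    also have "i * n + n = (i + 1) * n" by simp
    also have "\<dots> \<le> n * n" using assms by (intro mult_right_mono) auto
    finally show ?thesis by simp
  qed
  have d: "(i * n + j) div n = i" and m: "(i * n + j) mod n = j" using assms by auto
  show ?thesis unfolding Amat_def input_mem_def using le d m by simp
qed

lemma feasible_iff:
  fixes V :: "'a set" and xt :: "('a \<times> 'a) \<rightharpoonup> nat" and e :: "nat \<Rightarrow> 'a"
  assumes domx: "dom xt \<subseteq> P V" and ranx: "ran xt \<subseteq> {0, 1}"
    and bij: "bij_betw e {0..<card V} V"
  shows "completions V xt \<noteq> {} \<longleftrightarrow>
    \<not> (\<exists>i<card V. \<exists>j<card V. Amat (card V) e xt i j = 1 \<and>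
         fw (\<lambda>i j. Amat (card V) e xt i j = 2) (card V) i j)"
    (is "_ \<longleftrightarrow> \<not> ?C")
proof -
  define n where "n = card V"
  define A where "A = Amat n e xt"
  define E where "E = (\<lambda>i j. A i j = 2)"
  have inj: "inj_on e {0..<n}" and img: "e ` {0..<n} = V" using bij unfolding n_def bij_betw_def by auto
  have eV: "i < n \<Longrightarrow> e i \<in> V" for i using img by auto
  have einj: "i < n \<Longrightarrow> j < n \<Longrightarrow> e i = e j \<longleftrightarrow> i = j" for i j using inj by (auto dest: inj_onD)
  have xtv: "xt pq = Some v \<Longrightarrow> v = 0 \<or> v = 1" for pq v
  proof -
    assume "xt pq = Some v" then have "v \<in> ran xt" by (metis ranI)
    then show ?thesis using ranx by auto
  qed
  have A2: "i < n \<Longrightarrow> j < n \<Longrightarrow> A i j = 2 \<longleftrightarrow> xt (e i, e j) = Some 1" for i j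
    unfolding A_def by (auto simp: Amat_eq split: option.splits)
  have A1: "i < n \<Longrightarrow> j < n \<Longrightarrow> A i j = 1 \<longleftrightarrow> xt (e i, e j) = Some 0" for i j
    unfolding A_def by (auto simp: Amat_eq split: option.splits)
  have C: "?C \<longleftrightarrow> (\<exists>i<n. \<exists>j<n. A i j = 1 \<and> fw E n i j)" unfolding n_def A_def E_def by simp
  show ?thesis unfolding C
  proof
    assume "completions V xt \<noteq> {}"
    then obtain x where x: "x \<in> completions V xt" by blast
    have xX: "x \<in> X V" and agree: "\<And>pq. pq \<in> dom xt \<Longrightarrow> x pq = the (xt pq)"
      using x unfolding completions_def by auto
    have x01: "pq \<in> P V \<Longrightarrow> x pq = 0 \<or> x pq = 1" for pq using xX unfolding X_def by auto
    have xtr: "\<And>p q r. p \<in> V \<Longrightarrow> q \<in> V \<Longrightarrow> r \<in> V \<Longrightarrow> p \<noteq> q \<Longrightarrow> q \<noteq> r \<Longrightarrow> p \<noteq> r \<Longrightarrow>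
        int (x (p, q)) + int (x (q, r)) - int (x (p, r)) \<le> 1"
      using xX unfolding X_def by blast
    have key: "k \<le> n \<Longrightarrow> i < n \<Longrightarrow> j < n \<Longrightarrow> i \<noteq> j \<Longrightarrow> fw E k i j \<Longrightarrow> x (e i, e j) = 1" for k i j
    proof (induction k arbitrary: i j)
      case 0
      then have "xt (e i, e j) = Some 1" using A2 by (simp add: E_def)
      then show ?case using agree by (simp add: domI)
    next
      case (Suc k)
      have kn: "k < n" using Suc.prems by simp
      from Suc.prems(5) have "fw E k i j \<or> (fw E k i k \<and> fw E k k j)" by simp
      then show ?case
      proof
        assume "fw E k i j" then show ?thesis using Suc by simp
      next
        assume h: "fw E k i k \<and> fw E k k j"
        show ?thesis
        proof (cases "i = k \<or> j = k")
          case True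
          then show ?thesis using h Suc by auto
        next
          case False
          have 1: "x (e i, e k) = 1" using Suc.IH[of i k] Suc.prems h kn False by auto
          have 2: "x (e k, e j) = 1" using Suc.IH[of k j] Suc.prems h kn False by auto
          have d: "e i \<noteq> e k" "e k \<noteq> e j" "e i \<noteq> e j" using einj Suc.prems kn False by auto
          have "int (x (e i, e k)) + int (x (e k, e j)) - int (x (e i, e j)) \<le> 1"
            using xtr[OF eV eV eV] Suc.prems kn d by blast
          then have "x (e i, e j) \<ge> 1" using 1 2 by simp
          moreover have "x (e i, e j) = 0 \<or> x (e i, e j) = 1"
            using x01 d Suc.prems eV unfolding P_def by auto
          ultimately show ?thesis by auto
        qed
      qed
    qed
    show "\<not> (\<exists>i<n. \<exists>j<n. A i j = 1 \<and> fw E n i j)"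
    proof
      assume "\<exists>i<n. \<exists>j<n. A i j = 1 \<and> fw E n i j"
      then obtain i j where ij: "i < n" "j < n" "A i j = 1" "fw E n i j" by blast
      have xt0: "xt (e i, e j) = Some 0" using A1 ij by simp
      then have "(e i, e j) \<in> P V" using domx by auto
      then have "i \<noteq> j" unfolding P_def by auto
      then have "x (e i, e j) = 1" using key[of n i j] ij by simp
      moreover have "x (e i, e j) = 0" using agree[of "(e i, e j)"] xt0 by (simp add: domI)
      ultimately show False by simp
    qed
  next
    assume nc: "\<not> (\<exists>i<n. \<exists>j<n. A i j = 1 \<and> fw E n i j)"
    define ix where "ix = the_inv_into {0..<n} e"
    have ix: "p \<in> V \<Longrightarrow> ix p < n \<and> e (ix p) = p" for p
      unfolding ix_def using bij unfolding n_def
      by (metis atLeastLessThan_iff bij_betw_def f_the_inv_into_f_bij_betw the_inv_into_into order_refl)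
    define x :: "'a \<times> 'a \<Rightarrow> nat" where "x = (\<lambda>pq. if pq \<in> P V then (if fw E n (ix (fst pq)) (ix (snd pq)) then 1 else 0) else undefined)"
    have "x \<in> X V"
      unfolding X_def
    proof (intro CollectI conjI PiE_I ballI impI)
      show "x pq \<in> {0, 1}" if "pq \<in> P V" for pq using that unfolding x_def by auto
      show "x pq = undefined" if "pq \<notin> P V" for pq using that unfolding x_def by auto
      fix p q r assume pqr: "p \<in> V" "q \<in> V" "r \<in> V" "p \<noteq> q \<and> q \<noteq> r \<and> p \<noteq> r"
      then have inP: "(p, q) \<in> P V" "(q, r) \<in> P V" "(p, r) \<in> P V" unfolding P_def by auto
      show "int (x (p, q)) + int (x (q, r)) - int (x (p, r)) \<le> 1"
      proof (cases "fw E n (ix p) (ix q) \<and> fw E n (ix q) (ix r)")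
        case True
        then have "fw E n (ix p) (ix r)" using fw_trans[of "ix q" n E "ix p" "ix r"] ix pqr by blast
        then show ?thesis using inP True unfolding x_def by simp
      next
        case False
        then show ?thesis using inP unfolding x_def by auto
      qed
    qed
    moreover have "\<forall>pq \<in> dom xt. x pq = the (xt pq)"
    proof
      fix pq assume pq: "pq \<in> dom xt"
      then obtain p q where pqe: "pq = (p, q)" and inP: "(p, q) \<in> P V" using domx by (cases pq) auto
      then have pV: "p \<in> V" "q \<in> V" unfolding P_def by auto
      obtain v where v: "xt (p, q) = Some v" using pq pqe by auto
      define i j where "i = ix p" and "j = ix q"
      have ij: "i < n" "j < n" "e i = p" "e j = q" using ix pV unfolding i_def j_def by auto
      show "x pq = the (xt pq)"
      proof (cases "v = 1")
        case True
        then have "A i j = 2" using A2 ij v by simp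
        then have "fw E n i j" unfolding E_def by (rule fw_base)
        then show ?thesis using True v inP pqe unfolding x_def i_def j_def by simp
      next
        case False
        then have "v = 0" using xtv v by blast
        then have "A i j = 1" using A1 ij v by simp
        then have "\<not> fw E n i j" using nc ij by blast
        then show ?thesis using \<open>v = 0\<close> v inP pqe unfolding x_def i_def j_def by simp
      qed
    qed
    ultimately show "completions V xt \<noteq> {}" unfolding completions_def by blast
  qed
qed

definition stops :: "nat set" where
  "stops = {13,17,22,30,35,55,75,95,115,118,122,125,145,148,151,153,164}"

lemma stops_mem: "pc \<in> stops \<longleftrightarrow> pc \<in> {13,17,22,30,35,55,75,95,115,118,122,125,145,148,151,153,164::nat}"
  by (simp add: stops_def)

abbreviation "WP \<equiv> wp stops prog"

lemma len_prog: "length prog = 165" by (simp add: prog_def)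

lemma Suc0_one: "Suc 0 = 1" by simp

lemmas ex = wp_unfold step_def halted_def len_prog prog_nth stops_mem Suc0_one

lemma wp_seq:
  assumes a1: "wp S pr s (\<lambda>t s'. t \<le> T1 \<and> fst s' = L \<and> Pr (snd s'))"
    and a2: "\<And>M. Pr M \<Longrightarrow> wp S pr (L, M) (\<lambda>t s'. t \<le> T2 \<and> R s')"
  shows "wp S pr s (\<lambda>t s'. t \<le> T1 + T2 \<and> R s')"
proof (rule wp_then[OF a1])
  fix t s' assume a: "t \<le> T1 \<and> fst s' = L \<and> Pr (snd s')"
  then have s': "s' = (L, snd s')" by (cases s') auto
  show "wp S pr s' (\<lambda>t2 s. t + t2 \<le> T1 + T2 \<and> R s)"
    apply (subst s')
    apply (rule wp_mono[OF a2])
    using a by auto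
qed

definition acc :: "(nat \<Rightarrow> nat) \<Rightarrow> nat" where
  "acc I = 27 * I 2 + 9 * I 3 + 3 * I 4 + I 5"

lemma ph_pack:
  assumes "I 1 = 0"
  shows "WP (0, I) (\<lambda>t s. t \<le> 13 \<and> fst s = 13 \<and>
     (snd s 0 = I 0 \<and> snd s 1 = acc I \<and> snd s 2 = I 0 - 0 \<and> snd s 3 = 0 * I 0 \<and> snd s 4 = 1 \<and> (\<forall>a\<ge>6. snd s a = I a)))"
  using assms
  apply (simp add: ex del: One_nat_def)
  apply (rule wp_done)
   apply (simp add: stops_mem)
  apply (simp add: acc_def)
  done

definition SqInv :: "(nat \<Rightarrow> nat) \<Rightarrow> nat \<Rightarrow> nat \<Rightarrow> (nat \<Rightarrow> nat) \<Rightarrow> bool" where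
  "SqInv I n c M \<longleftrightarrow> M 0 = n \<and> M 1 = acc I \<and> M 2 = n - c \<and> M 3 = c * n \<and> M 4 = 1 \<and> (\<forall>a\<ge>6. M a = I a)"

lemma sq_body: "c < n \<Longrightarrow> SqInv I n c M \<Longrightarrow> WP (13, M) (\<lambda>t s. t \<le> 4 \<and> fst s = 13 \<and> SqInv I n (Suc c) (snd s))"
  unfolding SqInv_def
  apply (rule wp_step)
  apply (simp add: ex del: One_nat_def)
  apply (rule wp_done)
   apply (simp add: stops_mem)
  apply simp
  done

lemma sq_exit: "SqInv I n n M \<Longrightarrow> WP (13, M) (\<lambda>t s. t \<le> 1 \<and> fst s = 17 \<and> SqInv I n n (snd s))"
  unfolding SqInv_def
  apply (rule wp_step)
  apply (simp add: ex del: One_nat_def)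
  apply (rule wp_done)
   apply (simp add: stops_mem)
  apply simp
  done

lemma sq_loop: "SqInv I n 0 M \<Longrightarrow> WP (13, M) (\<lambda>t s. t \<le> n * 4 + 1 \<and> fst s = 17 \<and> SqInv I n n (snd s))"
  using wp_loop[where Inv = "SqInv I n" and N = n and c = 0 and L = 13 and T = 4 and T' = 1
     and Post = "\<lambda>s. fst s = 17 \<and> SqInv I n n (snd s)", OF sq_body sq_exit] by simp


definition CpInv :: "(nat \<Rightarrow> nat) \<Rightarrow> nat \<Rightarrow> nat \<Rightarrow> (nat \<Rightarrow> nat) \<Rightarrow> bool" where
  "CpInv I n c M \<longleftrightarrow> M 0 = n \<and> M 1 = acc I \<and> M 4 = 1 \<and> M 2 = n * n - c \<and>
     M 3 = n * n - c + (n * n + 32) \<and> (\<forall>a. 6 \<le> a \<longrightarrow> a \<le> n * n \<longrightarrow> M a = I a) \<and>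
     (\<forall>a. n * n - c < a \<longrightarrow> a \<le> n * n \<longrightarrow> M (n * n + 32 + a) = I a)"

lemma cp_setup: "SqInv I n n M \<Longrightarrow> WP (17, M) (\<lambda>t s. t \<le> 5 \<and> fst s = 22 \<and> CpInv I n 0 (snd s))"
  unfolding SqInv_def CpInv_def
  apply (rule wp_step)
  apply (simp add: ex del: One_nat_def)
  apply (rule wp_done)
   apply (simp add: stops_mem)
  apply simp
  done

lemma cp_body:
  assumes c: "c < n * n - 5" and inv: "CpInv I n c M"
  shows "WP (22, M) (\<lambda>t s. t \<le> 8 \<and> fst s = 22 \<and> CpInv I n (Suc c) (snd s))"
proof -
  define pa where "pa = n * n - c"
  define pd where "pd = n * n - c + (n * n + 32)"
  have r: "M 0 = n" "M 1 = acc I" "M 4 = 1" "M 2 = pa" "M 3 = pd"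
    using inv unfolding CpInv_def pa_def pd_def by auto
  have src: "\<And>a. 6 \<le> a \<Longrightarrow> a \<le> n * n \<Longrightarrow> M a = I a" and
    dst: "\<And>a. n * n - c < a \<Longrightarrow> a \<le> n * n \<Longrightarrow> M (n * n + 32 + a) = I a"
    using inv unfolding CpInv_def by auto
  have pa6: "pa - 5 \<noteq> 0" "\<not> pa \<le> 5" "pa \<noteq> 5" "6 \<le> pa" "pa \<le> n * n" using c unfolding pa_def by auto
  have ld: "M pa = I pa" using src pa6 by auto
  have e1: "pa - 1 = n * n - Suc c" and e2: "pd - 1 = n * n - Suc c + (n * n + 32)"
    unfolding pa_def pd_def using c by auto
  have pdgt: "pd > n * n" unfolding pd_def by simp
  have e3: "\<And>a. n * n + 32 + a = pd \<longleftrightarrow> a = pa" unfolding pd_def pa_def using c by auto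
  have pdne: "pd \<noteq> 0" "pd \<noteq> 1" "pd \<noteq> 2" "pd \<noteq> 3" "pd \<noteq> 4" "pd \<noteq> 5" unfolding pd_def by auto
  show ?thesis
    apply (rule wp_step)
    apply (simp add: ex r pa6 ld pdne del: One_nat_def)
    apply (rule wp_done)
     apply (simp add: stops_mem)
    unfolding CpInv_def
    apply (intro conjI allI impI)
           apply (simp_all add: r e1 e2 pdne del: One_nat_def)
    subgoal for a using src[of a] pdgt by auto
    subgoal for a
    proof (cases "a = pa")
      case True then show ?thesis using e3[of a] by simp
    next
      case False
      assume "n * n - Suc c < a" "a \<le> n * n"
      then have "n * n - c < a" using False c unfolding pa_def by auto
      then show ?thesis using dst[of a] e3[of a] False \<open>a \<le> n * n\<close> by simp
    qed
    done
qed

lemma cp_exit: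
  assumes inv: "CpInv I n (n * n - 5) M"
  shows "WP (22, M) (\<lambda>t s. t \<le> 3 \<and> fst s = 30 \<and> CpInv I n (n * n - 5) (snd s))"
proof -
  have p: "M 2 \<le> 5" using inv unfolding CpInv_def by auto
  show ?thesis
    apply (rule wp_step)
    apply (simp add: ex p del: One_nat_def)
    apply (rule wp_done)
     apply (simp add: stops_mem)
    using inv unfolding CpInv_def by auto
qed

lemma cp_loop: "CpInv I n 0 M \<Longrightarrow> WP (22, M) (\<lambda>t s. t \<le> (n * n - 5) * 8 + 3 \<and> fst s = 30 \<and> CpInv I n (n * n - 5) (snd s))"
  using wp_loop[where Inv = "CpInv I n" and N = "n * n - 5" and c = 0 and L = 22 and T = 8 and T' = 3
     and Post = "\<lambda>s. fst s = 30 \<and> CpInv I n (n * n - 5) (snd s)", OF cp_body cp_exit] by simp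

definition P35 :: "(nat \<Rightarrow> nat) \<Rightarrow> nat \<Rightarrow> (nat \<Rightarrow> nat) \<Rightarrow> bool" where
  "P35 I n M \<longleftrightarrow> M 0 = n \<and> M 1 = acc I \<and> M 6 = n * n + 32 \<and> M (n * n + 32 + 1) = 0 \<and>
     (\<forall>a. 6 \<le> a \<longrightarrow> a \<le> n * n \<longrightarrow> M (n * n + 32 + a) = I a)"

lemma ph30:
  assumes inv: "CpInv I n (n * n - 5) M"
  shows "WP (30, M) (\<lambda>t s. t \<le> 5 \<and> fst s = 35 \<and> P35 I n (snd s))"
proof -
  define B where "B = n * n + 32"
  have r: "M 0 = n" "M 1 = acc I" "M 3 - M 2 = B"
    using inv unfolding CpInv_def B_def by auto
  have dst: "\<And>a. 6 \<le> a \<Longrightarrow> a \<le> n * n \<Longrightarrow> M (B + a) = I a"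
    using inv unfolding CpInv_def B_def by auto
  have b: "B \<ge> 32" unfolding B_def by simp
  show ?thesis
    apply (rule wp_step)
    apply (simp add: ex r del: One_nat_def)
    apply (rule wp_done)
     apply (simp add: stops_mem)
    unfolding P35_def B_def[symmetric]
    using r b dst by auto
qed


definition DecInv :: "(nat \<Rightarrow> nat) \<Rightarrow> nat \<Rightarrow> nat \<Rightarrow> nat \<Rightarrow> (nat \<Rightarrow> nat) \<Rightarrow> bool" where
  "DecInv I n k r M \<longleftrightarrow> M 0 = n \<and> M 1 = r \<and> M 6 = n * n + 32 \<and>
     (\<forall>a. 1 \<le> a \<longrightarrow> a < 2 + k \<longrightarrow> M (n * n + 32 + a) = I a) \<and>
     (\<forall>a. 6 \<le> a \<longrightarrow> a \<le> n * n \<longrightarrow> M (n * n + 32 + a) = I a)"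

lemma dec_blk0:
  assumes m1: "M 1 = 27 * d + r" and d: "d \<le> 2" and rw: "r < 27" and m6: "M 6 = B" and b: "32 \<le> B"
  shows "WP (35, M) (\<lambda>t s. t \<le> 13 \<and> fst s = 55 \<and> snd s 1 = r \<and> snd s 6 = B \<and> snd s (B + 2) = d \<and>
     (\<forall>a. a \<noteq> 1 \<longrightarrow> a \<noteq> 7 \<longrightarrow> a \<noteq> 8 \<longrightarrow> a \<noteq> 9 \<longrightarrow> a \<noteq> B + 2 \<longrightarrow> snd s a = M a))"
proof -
  have bne: "B + 2 \<noteq> 1" "B + 2 \<noteq> 6" "B + 2 \<noteq> 7" "B + 2 \<noteq> 8" "B + 2 \<noteq> 9" using b by auto
  have "d = 0 \<or> d = 1 \<or> d = 2" using d by auto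
  then show ?thesis
  proof (elim disjE)
    assume d0: "d = 0"
    have c: "M 1 = r" "r \<le> 53" "r \<le> 26" using m1 rw d0 by auto
    show ?thesis
      apply (rule wp_step)
      apply (simp add: ex m6 c bne del: One_nat_def)
      apply (rule wp_done)
       apply (simp add: stops_mem)
      using bne d0 by (simp add: c m6 del: One_nat_def)
  next
    assume d1: "d = 1"
    have c: "M 1 = 27 + r" "r \<le> 26" using m1 rw d1 by auto
    show ?thesis
      apply (rule wp_step)
      apply (simp add: ex m6 c bne del: One_nat_def)
      apply (rule wp_done)
       apply (simp add: stops_mem)
      using bne d1 by (simp add: c m6 del: One_nat_def)
  next
    assume d2: "d = 2"
    have c: "M 1 = 54 + r" "r \<le> 26" using m1 rw d2 by auto
    show ?thesis
      apply (rule wp_step)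
      apply (simp add: ex m6 c bne del: One_nat_def)
      apply (rule wp_done)
       apply (simp add: stops_mem)
      using bne d2 by (simp add: c m6 del: One_nat_def)
  qed
qed

lemma dec_step0:
  assumes inv: "DecInv I n 0 (acc I) M" and Ile: "\<forall>a>0. I a \<le> 2"
  shows "WP (35, M) (\<lambda>t s. t \<le> 13 \<and> fst s = 55 \<and> DecInv I n 1 (9 * I 3 + 3 * I 4 + I 5) (snd s))"
proof -
  have m1: "M 1 = 27 * I 2 + (9 * I 3 + 3 * I 4 + I 5)" using inv unfolding DecInv_def acc_def by simp
  have m6: "M 6 = n * n + 32" using inv unfolding DecInv_def by simp
  have d: "I 2 \<le> 2" using Ile by simp
  have rw: "9 * I 3 + 3 * I 4 + I 5 < 27" using Ile[rule_format, of 3] Ile[rule_format, of 4] Ile[rule_format, of 5] by simp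
  have b: "32 \<le> n * n + 32" by simp
  show ?thesis
  proof (rule wp_mono[OF dec_blk0[OF m1 d rw m6 b]])
    fix t :: nat and s :: config
    assume h: "t \<le> 13 \<and> fst s = 55 \<and> snd s 1 = 9 * I 3 + 3 * I 4 + I 5 \<and> snd s 6 = n * n + 32 \<and> snd s (n * n + 32 + 2) = I 2 \<and>
      (\<forall>a. a \<noteq> 1 \<longrightarrow> a \<noteq> 7 \<longrightarrow> a \<noteq> 8 \<longrightarrow> a \<noteq> 9 \<longrightarrow> a \<noteq> n * n + 32 + 2 \<longrightarrow> snd s a = M a)"
    have fr: "\<And>a. a \<noteq> 2 \<Longrightarrow> snd s (n * n + 32 + a) = M (n * n + 32 + a)"
      using h by auto
    have m0: "snd s 0 = M 0" using h by auto
    show "t \<le> 13 \<and> fst s = 55 \<and> DecInv I n 1 (9 * I 3 + 3 * I 4 + I 5) (snd s)"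
      unfolding DecInv_def
    proof (intro conjI allI impI)
      fix a :: nat assume a: "1 \<le> a" "a < 2 + 1"
      show "snd s (n * n + 32 + a) = I a"
      proof (cases "a = 2")
        case True then show ?thesis using h by simp
      next
        case False then show ?thesis using fr[OF False] inv a unfolding DecInv_def by auto
      qed
    next
      fix a :: nat assume a: "6 \<le> a" "a \<le> n * n"
      then have "a \<noteq> 2" by simp
      then show "snd s (n * n + 32 + a) = I a" using fr inv a unfolding DecInv_def by auto
    qed (use h m0 inv in \<open>auto simp: DecInv_def\<close>)
  qed
qed

lemma dec_blk1:
  assumes m1: "M 1 = 9 * d + r" and d: "d \<le> 2" and rw: "r < 9" and m6: "M 6 = B" and b: "32 \<le> B"
  shows "WP (55, M) (\<lambda>t s. t \<le> 13 \<and> fst s = 75 \<and> snd s 1 = r \<and> snd s 6 = B \<and> snd s (B + 3) = d \<and>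
     (\<forall>a. a \<noteq> 1 \<longrightarrow> a \<noteq> 7 \<longrightarrow> a \<noteq> 8 \<longrightarrow> a \<noteq> 9 \<longrightarrow> a \<noteq> B + 3 \<longrightarrow> snd s a = M a))"
proof -
  have bne: "B + 3 \<noteq> 1" "B + 3 \<noteq> 6" "B + 3 \<noteq> 7" "B + 3 \<noteq> 8" "B + 3 \<noteq> 9" using b by auto
  have "d = 0 \<or> d = 1 \<or> d = 2" using d by auto
  then show ?thesis
  proof (elim disjE)
    assume d0: "d = 0"
    have c: "M 1 = r" "r \<le> 17" "r \<le> 8" using m1 rw d0 by auto
    show ?thesis
      apply (rule wp_step)
      apply (simp add: ex m6 c bne del: One_nat_def)
      apply (rule wp_done)
       apply (simp add: stops_mem)
      using bne d0 by (simp add: c m6 del: One_nat_def)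
  next
    assume d1: "d = 1"
    have c: "M 1 = 9 + r" "r \<le> 8" using m1 rw d1 by auto
    show ?thesis
      apply (rule wp_step)
      apply (simp add: ex m6 c bne del: One_nat_def)
      apply (rule wp_done)
       apply (simp add: stops_mem)
      using bne d1 by (simp add: c m6 del: One_nat_def)
  next
    assume d2: "d = 2"
    have c: "M 1 = 18 + r" "r \<le> 8" using m1 rw d2 by auto
    show ?thesis
      apply (rule wp_step)
      apply (simp add: ex m6 c bne del: One_nat_def)
      apply (rule wp_done)
       apply (simp add: stops_mem)
      using bne d2 by (simp add: c m6 del: One_nat_def)
  qed
qed

lemma dec_step1:
  assumes inv: "DecInv I n 1 (9 * I 3 + 3 * I 4 + I 5) M" and Ile: "\<forall>a>0. I a \<le> 2"
  shows "WP (55, M) (\<lambda>t s. t \<le> 13 \<and> fst s = 75 \<and> DecInv I n 2 (3 * I 4 + I 5) (snd s))"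
proof -
  have m1: "M 1 = 9 * I 3 + (3 * I 4 + I 5)" using inv unfolding DecInv_def acc_def by simp
  have m6: "M 6 = n * n + 32" using inv unfolding DecInv_def by simp
  have d: "I 3 \<le> 2" using Ile by simp
  have rw: "3 * I 4 + I 5 < 9" using Ile[rule_format, of 3] Ile[rule_format, of 4] Ile[rule_format, of 5] by simp
  have b: "32 \<le> n * n + 32" by simp
  show ?thesis
  proof (rule wp_mono[OF dec_blk1[OF m1 d rw m6 b]])
    fix t :: nat and s :: config
    assume h: "t \<le> 13 \<and> fst s = 75 \<and> snd s 1 = 3 * I 4 + I 5 \<and> snd s 6 = n * n + 32 \<and> snd s (n * n + 32 + 3) = I 3 \<and>
      (\<forall>a. a \<noteq> 1 \<longrightarrow> a \<noteq> 7 \<longrightarrow> a \<noteq> 8 \<longrightarrow> a \<noteq> 9 \<longrightarrow> a \<noteq> n * n + 32 + 3 \<longrightarrow> snd s a = M a)"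
    have fr: "\<And>a. a \<noteq> 3 \<Longrightarrow> snd s (n * n + 32 + a) = M (n * n + 32 + a)"
      using h by auto
    have m0: "snd s 0 = M 0" using h by auto
    show "t \<le> 13 \<and> fst s = 75 \<and> DecInv I n 2 (3 * I 4 + I 5) (snd s)"
      unfolding DecInv_def
    proof (intro conjI allI impI)
      fix a :: nat assume a: "1 \<le> a" "a < 2 + 2"
      show "snd s (n * n + 32 + a) = I a"
      proof (cases "a = 3")
        case True then show ?thesis using h by simp
      next
        case False then show ?thesis using fr[OF False] inv a unfolding DecInv_def by auto
      qed
    next
      fix a :: nat assume a: "6 \<le> a" "a \<le> n * n"
      then have "a \<noteq> 3" by simp
      then show "snd s (n * n + 32 + a) = I a" using fr inv a unfolding DecInv_def by auto
    qed (use h m0 inv in \<open>auto simp: DecInv_def\<close>)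
  qed
qed

lemma dec_blk2:
  assumes m1: "M 1 = 3 * d + r" and d: "d \<le> 2" and rw: "r < 3" and m6: "M 6 = B" and b: "32 \<le> B"
  shows "WP (75, M) (\<lambda>t s. t \<le> 13 \<and> fst s = 95 \<and> snd s 1 = r \<and> snd s 6 = B \<and> snd s (B + 4) = d \<and>
     (\<forall>a. a \<noteq> 1 \<longrightarrow> a \<noteq> 7 \<longrightarrow> a \<noteq> 8 \<longrightarrow> a \<noteq> 9 \<longrightarrow> a \<noteq> B + 4 \<longrightarrow> snd s a = M a))"
proof -
  have bne: "B + 4 \<noteq> 1" "B + 4 \<noteq> 6" "B + 4 \<noteq> 7" "B + 4 \<noteq> 8" "B + 4 \<noteq> 9" using b by auto
  have "d = 0 \<or> d = 1 \<or> d = 2" using d by auto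
  then show ?thesis
  proof (elim disjE)
    assume d0: "d = 0"
    have c: "M 1 = r" "r \<le> 5" "r \<le> 2" using m1 rw d0 by auto
    show ?thesis
      apply (rule wp_step)
      apply (simp add: ex m6 c bne del: One_nat_def)
      apply (rule wp_done)
       apply (simp add: stops_mem)
      using bne d0 by (simp add: c m6 del: One_nat_def)
  next
    assume d1: "d = 1"
    have c: "M 1 = 3 + r" "r \<le> 2" using m1 rw d1 by auto
    show ?thesis
      apply (rule wp_step)
      apply (simp add: ex m6 c bne del: One_nat_def)
      apply (rule wp_done)
       apply (simp add: stops_mem)
      using bne d1 by (simp add: c m6 del: One_nat_def)
  next
    assume d2: "d = 2"
    have c: "M 1 = 6 + r" "r \<le> 2" using m1 rw d2 by auto
    show ?thesis
      apply (rule wp_step)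
      apply (simp add: ex m6 c bne del: One_nat_def)
      apply (rule wp_done)
       apply (simp add: stops_mem)
      using bne d2 by (simp add: c m6 del: One_nat_def)
  qed
qed

lemma dec_step2:
  assumes inv: "DecInv I n 2 (3 * I 4 + I 5) M" and Ile: "\<forall>a>0. I a \<le> 2"
  shows "WP (75, M) (\<lambda>t s. t \<le> 13 \<and> fst s = 95 \<and> DecInv I n 3 (I 5) (snd s))"
proof -
  have m1: "M 1 = 3 * I 4 + (I 5)" using inv unfolding DecInv_def acc_def by simp
  have m6: "M 6 = n * n + 32" using inv unfolding DecInv_def by simp
  have d: "I 4 \<le> 2" using Ile by simp
  have rw: "I 5 < 3" using Ile[rule_format, of 3] Ile[rule_format, of 4] Ile[rule_format, of 5] by simp
  have b: "32 \<le> n * n + 32" by simp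
  show ?thesis
  proof (rule wp_mono[OF dec_blk2[OF m1 d rw m6 b]])
    fix t :: nat and s :: config
    assume h: "t \<le> 13 \<and> fst s = 95 \<and> snd s 1 = I 5 \<and> snd s 6 = n * n + 32 \<and> snd s (n * n + 32 + 4) = I 4 \<and>
      (\<forall>a. a \<noteq> 1 \<longrightarrow> a \<noteq> 7 \<longrightarrow> a \<noteq> 8 \<longrightarrow> a \<noteq> 9 \<longrightarrow> a \<noteq> n * n + 32 + 4 \<longrightarrow> snd s a = M a)"
    have fr: "\<And>a. a \<noteq> 4 \<Longrightarrow> snd s (n * n + 32 + a) = M (n * n + 32 + a)"
      using h by auto
    have m0: "snd s 0 = M 0" using h by auto
    show "t \<le> 13 \<and> fst s = 95 \<and> DecInv I n 3 (I 5) (snd s)"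
      unfolding DecInv_def
    proof (intro conjI allI impI)
      fix a :: nat assume a: "1 \<le> a" "a < 2 + 3"
      show "snd s (n * n + 32 + a) = I a"
      proof (cases "a = 4")
        case True then show ?thesis using h by simp
      next
        case False then show ?thesis using fr[OF False] inv a unfolding DecInv_def by auto
      qed
    next
      fix a :: nat assume a: "6 \<le> a" "a \<le> n * n"
      then have "a \<noteq> 4" by simp
      then show "snd s (n * n + 32 + a) = I a" using fr inv a unfolding DecInv_def by auto
    qed (use h m0 inv in \<open>auto simp: DecInv_def\<close>)
  qed
qed

lemma dec_blk3:
  assumes m1: "M 1 = 1 * d + r" and d: "d \<le> 2" and rw: "r < 1" and m6: "M 6 = B" and b: "32 \<le> B"
  shows "WP (95, M) (\<lambda>t s. t \<le> 13 \<and> fst s = 115 \<and> snd s 1 = r \<and> snd s 6 = B \<and> snd s (B + 5) = d \<and>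
     (\<forall>a. a \<noteq> 1 \<longrightarrow> a \<noteq> 7 \<longrightarrow> a \<noteq> 8 \<longrightarrow> a \<noteq> 9 \<longrightarrow> a \<noteq> B + 5 \<longrightarrow> snd s a = M a))"
proof -
  have bne: "B + 5 \<noteq> 1" "B + 5 \<noteq> 6" "B + 5 \<noteq> 7" "B + 5 \<noteq> 8" "B + 5 \<noteq> 9" using b by auto
  have "d = 0 \<or> d = 1 \<or> d = 2" using d by auto
  then show ?thesis
  proof (elim disjE)
    assume d0: "d = 0"
    have c: "M 1 = r" "r = 0" using m1 rw d0 by auto
    show ?thesis
      apply (rule wp_step)
      apply (simp add: ex m6 c bne del: One_nat_def)
      apply (rule wp_done)
       apply (simp add: stops_mem)
      using bne d0 by (simp add: c m6 del: One_nat_def)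
  next
    assume d1: "d = 1"
    have c: "M 1 = 1 + r" "r = 0" using m1 rw d1 by auto
    show ?thesis
      apply (rule wp_step)
      apply (simp add: ex m6 c bne del: One_nat_def)
      apply (rule wp_done)
       apply (simp add: stops_mem)
      using bne d1 by (simp add: c m6 del: One_nat_def)
  next
    assume d2: "d = 2"
    have c: "M 1 = 2 + r" "r = 0" using m1 rw d2 by auto
    show ?thesis
      apply (rule wp_step)
      apply (simp add: ex m6 c bne del: One_nat_def)
      apply (rule wp_done)
       apply (simp add: stops_mem)
      using bne d2 by (simp add: c m6 del: One_nat_def)
  qed
qed

lemma dec_step3:
  assumes inv: "DecInv I n 3 (I 5) M" and Ile: "\<forall>a>0. I a \<le> 2"
  shows "WP (95, M) (\<lambda>t s. t \<le> 13 \<and> fst s = 115 \<and> DecInv I n 4 (0) (snd s))"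
proof -
  have m1: "M 1 = 1 * I 5 + (0)" using inv unfolding DecInv_def acc_def by simp
  have m6: "M 6 = n * n + 32" using inv unfolding DecInv_def by simp
  have d: "I 5 \<le> 2" using Ile by simp
  have rw: "(0::nat) < 1" using Ile[rule_format, of 3] Ile[rule_format, of 4] Ile[rule_format, of 5] by simp
  have b: "32 \<le> n * n + 32" by simp
  show ?thesis
  proof (rule wp_mono[OF dec_blk3[OF m1 d rw m6 b]])
    fix t :: nat and s :: config
    assume h: "t \<le> 13 \<and> fst s = 115 \<and> snd s 1 = 0 \<and> snd s 6 = n * n + 32 \<and> snd s (n * n + 32 + 5) = I 5 \<and>
      (\<forall>a. a \<noteq> 1 \<longrightarrow> a \<noteq> 7 \<longrightarrow> a \<noteq> 8 \<longrightarrow> a \<noteq> 9 \<longrightarrow> a \<noteq> n * n + 32 + 5 \<longrightarrow> snd s a = M a)"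
    have fr: "\<And>a. a \<noteq> 5 \<Longrightarrow> snd s (n * n + 32 + a) = M (n * n + 32 + a)"
      using h by auto
    have m0: "snd s 0 = M 0" using h by auto
    show "t \<le> 13 \<and> fst s = 115 \<and> DecInv I n 4 (0) (snd s)"
      unfolding DecInv_def
    proof (intro conjI allI impI)
      fix a :: nat assume a: "1 \<le> a" "a < 2 + 4"
      show "snd s (n * n + 32 + a) = I a"
      proof (cases "a = 5")
        case True then show ?thesis using h by simp
      next
        case False then show ?thesis using fr[OF False] inv a unfolding DecInv_def by auto
      qed
    next
      fix a :: nat assume a: "6 \<le> a" "a \<le> n * n"
      then have "a \<noteq> 5" by simp
      then show "snd s (n * n + 32 + a) = I a" using fr inv a unfolding DecInv_def by auto
    qed (use h m0 inv in \<open>auto simp: DecInv_def\<close>)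
  qed
qed

definition ad :: "nat \<Rightarrow> nat \<Rightarrow> nat \<Rightarrow> nat \<Rightarrow> nat" where
  "ad B n i j = B + 1 + i * n + j"

definition regn :: "(nat \<Rightarrow> nat) \<Rightarrow> nat \<Rightarrow> nat \<Rightarrow> (nat \<Rightarrow> nat \<Rightarrow> nat) \<Rightarrow> bool" where
  "regn M B n F \<longleftrightarrow> (\<forall>i<n. \<forall>j<n. M (ad B n i j) = F i j)"

lemma idx_le: "i < n \<Longrightarrow> j < n \<Longrightarrow> 1 + i * n + j \<le> (n::nat) * n"
proof -
  assume a: "i < n" "j < n"
  have "i * n + j < i * n + n" using a by simp
  also have "i * n + n = (i + 1) * n" by simp
  also have "\<dots> \<le> n * n" using a by (intro mult_right_mono) auto
  finally show ?thesis by simp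
qed

definition Init :: "(nat \<Rightarrow> nat) \<Rightarrow> nat \<Rightarrow> (nat \<Rightarrow> nat) \<Rightarrow> bool" where
  "Init I n M \<longleftrightarrow> M 0 = n \<and> M 6 = n * n + 32 \<and> regn M (n * n + 32) n (\<lambda>i j. I (1 + i * n + j))"

lemma p35_dec:
  assumes "P35 I n M" "I 1 = 0" shows "DecInv I n 0 (acc I) M"
proof -
  have "\<forall>a. 1 \<le> a \<longrightarrow> a < 2 + 0 \<longrightarrow> M (n * n + 32 + a) = I a"
  proof (intro allI impI)
    fix a :: nat assume "1 \<le> a" "a < 2 + 0" then have "a = 1" by simp
    then show "M (n * n + 32 + a) = I a" using assms unfolding P35_def by simp
  qed
  then show ?thesis using assms unfolding P35_def DecInv_def by blast
qed

lemma dec_init: "DecInv I n 4 0 M \<Longrightarrow> Init I n M"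
  unfolding DecInv_def Init_def regn_def
proof (intro conjI allI impI; (elim conjE)?)
  fix i j assume h: "M 0 = n" "M 1 = 0" "M 6 = n * n + 32"
    "\<forall>a. 1 \<le> a \<longrightarrow> a < 2 + 4 \<longrightarrow> M (n * n + 32 + a) = I a"
    "\<forall>a. 6 \<le> a \<longrightarrow> a \<le> n * n \<longrightarrow> M (n * n + 32 + a) = I a" and ij: "i < n" "j < n"
  define a where "a = 1 + i * n + j"
  have "a \<le> n * n" using idx_le ij unfolding a_def .
  moreover have "1 \<le> a" unfolding a_def by simp
  ultimately have "M (n * n + 32 + a) = I a"
    using h(4)[rule_format, of a] h(5)[rule_format, of a] by (cases "a < 6") auto
  then show "M (ad (n * n + 32) n i j) = I (1 + i * n + j)" unfolding ad_def a_def by (simp add: add.assoc)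
qed auto

lemma ph_pack2:
  assumes "I 1 = 0" "I 0 = n"
  shows "WP (0, I) (\<lambda>t s. t \<le> 13 \<and> fst s = 13 \<and> SqInv I n 0 (snd s))"
  using ph_pack[of I, OF assms(1)] apply (rule wp_mono) using assms(2) unfolding SqInv_def by auto

lemma init:
  assumes I1: "I 1 = 0" and I0: "I 0 = n" and Ile: "\<forall>a>0. I a \<le> 2"
  shows "WP (0, I) (\<lambda>t s. t \<le> 13 + (n * 4 + 1) + 5 + ((n * n - 5) * 8 + 3) + 5 + 13 + 13 + 13 + 13 \<and>
     fst s = 115 \<and> Init I n (snd s))"
proof -
  note s1 = ph_pack2[OF I1 I0]
  note s2 = wp_seq[OF s1 sq_loop]
  note s3 = wp_seq[OF s2 cp_setup]
  note s4 = wp_seq[OF s3 cp_loop]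
  note s5 = wp_seq[OF s4 ph30]
  note s6 = wp_seq[OF s5 dec_step0[OF p35_dec[of I n, OF _ I1] Ile]]
  note s7 = wp_seq[OF s6 dec_step1[OF _ Ile]]
  note s8 = wp_seq[OF s7 dec_step2[OF _ Ile]]
  note s9 = wp_seq[OF s8 dec_step3[OF _ Ile]]
  show ?thesis using s9 by (rule wp_mono) (auto intro: dec_init)
qed


section \<open>Floyd-Warshall phase\<close>

definition Ed :: "(nat \<Rightarrow> nat \<Rightarrow> nat) \<Rightarrow> nat \<Rightarrow> nat \<Rightarrow> bool" where
  "Ed A i j \<longleftrightarrow> A i j = 2"

definition cv :: "bool \<Rightarrow> nat \<Rightarrow> nat" where
  "cv f v = (if f \<and> v < 2 then v + 2 else v)"

definition Sm :: "(nat \<Rightarrow> nat \<Rightarrow> nat) \<Rightarrow> nat \<Rightarrow> nat \<Rightarrow> nat \<Rightarrow> nat \<Rightarrow> nat \<Rightarrow> nat" where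
  "Sm A k i j a b = cv (if a < i \<or> (a = i \<and> b < j) then fw (Ed A) (Suc k) a b else fw (Ed A) k a b) (A a b)"

lemma Sm_col: "Sm A k i j a k = cv (fw (Ed A) k a k) (A a k)"
  unfolding Sm_def by (simp del: fw.simps add: fw_Suc_col)

lemma Sm_row: "Sm A k i j k b = cv (fw (Ed A) k k b) (A k b)"
  unfolding Sm_def by (simp del: fw.simps add: fw_Suc_row)

lemma Sm_cur: "Sm A k i j i j = cv (fw (Ed A) k i j) (A i j)"
  unfolding Sm_def by auto

lemma Sm_next_cur: "Sm A k i (Suc j) i j = cv (fw (Ed A) (Suc k) i j) (A i j)"
  unfolding Sm_def by auto

lemma Sm_other: "(a, b) \<noteq> (i, j) \<Longrightarrow> Sm A k i (Suc j) a b = Sm A k i j a b"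
  unfolding Sm_def by (auto simp: less_Suc_eq)

lemma Sm_row_end: "b < n \<Longrightarrow> Sm A k i n a b = Sm A k (Suc i) 0 a b"
  unfolding Sm_def by (auto simp: less_Suc_eq)

lemma Sm_k_end: "a < n \<Longrightarrow> Sm A k n 0 a b = Sm A (Suc k) 0 0 a b"
  unfolding Sm_def by auto

lemma Sm_init: "Sm A 0 0 0 a b = A a b"
  unfolding Sm_def cv_def Ed_def by auto

lemma cv_le1: "v \<le> 2 \<Longrightarrow> (v = 2 \<longrightarrow> f) \<Longrightarrow> cv f v \<le> 1 \<longleftrightarrow> \<not> f"
  unfolding cv_def by auto

lemma fw_Ed: "A a b = 2 \<Longrightarrow> fw (Ed A) k a b"
  by (rule fw_base) (simp add: Ed_def)

lemma ad_plus: "ad B n i 0 + j = ad B n i j"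
  unfolding ad_def by simp

lemma ad_plus_n: "ad B n i 0 + n = ad B n (Suc i) 0"
  unfolding ad_def by simp

lemma ad_reg1: "32 \<le> B \<Longrightarrow> r < 33 \<Longrightarrow> ad B n a b = r \<longleftrightarrow> False"
  unfolding ad_def by auto

lemma ad_reg2: "32 \<le> B \<Longrightarrow> r < 33 \<Longrightarrow> r = ad B n a b \<longleftrightarrow> False"
  unfolding ad_def by auto

lemma ad_inj: "a < n \<Longrightarrow> b < n \<Longrightarrow> i < n \<Longrightarrow> j < n \<Longrightarrow> ad B n a b = ad B n i j \<longleftrightarrow> a = i \<and> b = j"
proof
  assume h: "a < n" "b < n" "i < n" "j < n" "ad B n a b = ad B n i j"
  then have e: "a * n + b = i * n + j" unfolding ad_def by simp
  have "(a * n + b) div n = a" "(i * n + j) div n = i" "(a * n + b) mod n = b" "(i * n + j) mod n = j"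
    using h by auto
  then show "a = i \<and> b = j" using e by metis
qed auto

lemma regn_reg: "32 \<le> B \<Longrightarrow> r < 33 \<Longrightarrow> regn (M(r := v)) B n F = regn M B n F"
proof -
  assume "32 \<le> B" "r < 33"
  then have "\<And>a b. (M(r := v)) (ad B n a b) = M (ad B n a b)" using ad_reg1 by simp
  then show ?thesis unfolding regn_def by simp
qed

lemma regn_regs_cell: "32 \<le> B \<Longrightarrow> r < 33 \<Longrightarrow> regn (M(r := x, ad B n i j := v)) B n F = regn (M(ad B n i j := v)) B n F"
proof -
  assume "32 \<le> B" "r < 33"
  then have "\<And>a b. (M(r := x, ad B n i j := v)) (ad B n a b) = (M(ad B n i j := v)) (ad B n a b)" using ad_reg1 by simp
  then show ?thesis unfolding regn_def by simp
qed

lemma regn_cell: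
  assumes "i < n" "j < n" "regn M B n F" "G i j = v" "\<And>a b. a < n \<Longrightarrow> b < n \<Longrightarrow> (a, b) \<noteq> (i, j) \<Longrightarrow> G a b = F a b"
  shows "regn (M(ad B n i j := v)) B n G"
  unfolding regn_def
proof (intro allI impI)
  fix a b assume ab: "a < n" "b < n"
  show "(M(ad B n i j := v)) (ad B n a b) = G a b"
  proof (cases "a = i \<and> b = j")
    case True then show ?thesis using assms by simp
  next
    case False
    then have "ad B n a b \<noteq> ad B n i j" using ad_inj[OF ab assms(1,2)] by simp
    then show ?thesis using assms ab False unfolding regn_def by auto
  qed
qed

lemma regn_same: "regn M B n F \<Longrightarrow> (\<And>a b. a < n \<Longrightarrow> b < n \<Longrightarrow> G a b = F a b) \<Longrightarrow> regn M B n G"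
  unfolding regn_def by auto

lemma regn_get: "regn M B n F \<Longrightarrow> a < n \<Longrightarrow> b < n \<Longrightarrow> M (ad B n a b) = F a b"
  unfolding regn_def by auto

definition JInv :: "(nat \<Rightarrow> nat \<Rightarrow> nat) \<Rightarrow> nat \<Rightarrow> nat \<Rightarrow> nat \<Rightarrow> nat \<Rightarrow> nat \<Rightarrow> (nat \<Rightarrow> nat) \<Rightarrow> bool" where
  "JInv A n B k i j M \<longleftrightarrow> M 0 = n \<and> M 6 = B \<and> M 10 = 1 \<and> M 11 = k \<and> M 12 = i \<and> M 13 = j \<and>
     M 14 = ad B n k 0 \<and> M 15 = ad B n i 0 \<and> k < n \<and> i < n \<and> 32 \<le> B \<and> regn M B n (Sm A k i j)"

lemma J_body:
  assumes jn: "j < n" and inv: "JInv A n B k i j M" and Ab: "\<forall>a<n. \<forall>b<n. A a b \<le> 2"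
  shows "WP (125, M) (\<lambda>t s. t \<le> 19 \<and> fst s = 125 \<and> JInv A n B k i (Suc j) (snd s))"
proof -
  let ?E = "Ed A"
  have r: "M 0 = n" "M 6 = B" "M 10 = 1" "M 11 = k" "M 12 = i" "M 13 = j" "M 14 = ad B n k 0" "M 15 = ad B n i 0"
    and kn: "k < n" and "i < n" and B: "32 \<le> B" and rg: "regn M B n (Sm A k i j)"
    using inv unfolding JInv_def by auto
  have nj: "\<not> n \<le> j" using jn by simp
  have lk: "M (ad B n i k) = cv (fw ?E k i k) (A i k)" using regn_get[OF rg \<open>i < n\<close> kn] by (simp add: Sm_col)
  have kj: "M (ad B n k j) = cv (fw ?E k k j) (A k j)" using regn_get[OF rg kn jn] by (simp add: Sm_row)
  have ij: "M (ad B n i j) = cv (fw ?E k i j) (A i j)" using regn_get[OF rg \<open>i < n\<close> jn] by (simp add: Sm_cur)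
  have e1: "cv (fw ?E k i k) (A i k) \<le> 1 \<longleftrightarrow> \<not> fw ?E k i k"
    using Ab \<open>i < n\<close> kn by (intro cv_le1) (auto intro: fw_Ed)
  have e2: "cv (fw ?E k k j) (A k j) \<le> 1 \<longleftrightarrow> \<not> fw ?E k k j"
    using Ab jn kn by (intro cv_le1) (auto intro: fw_Ed)
  have e3: "cv (fw ?E k i j) (A i j) \<le> 1 \<longleftrightarrow> \<not> fw ?E k i j"
    using Ab jn \<open>i < n\<close> by (intro cv_le1) (auto intro: fw_Ed)
  have same: "regn M B n (Sm A k i (Suc j))" if "fw ?E (Suc k) i j = fw ?E k i j"
    using rg apply (rule regn_same)
    subgoal for a b using that by (cases "(a, b) = (i, j)") (auto simp: Sm_other Sm_cur Sm_next_cur)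
    done
  have fin: "JInv A n B k i (Suc j) M'" if "M' 0 = n" "M' 6 = B" "M' 10 = 1" "M' 11 = k" "M' 12 = i" "M' 13 = Suc j"
      "M' 14 = ad B n k 0" "M' 15 = ad B n i 0" "regn M' B n (Sm A k i (Suc j))" for M'
    using that kn \<open>i < n\<close> B unfolding JInv_def by auto
  show ?thesis
  proof (cases "fw ?E k i k \<and> fw ?E k k j \<and> \<not> fw ?E k i j")
    case True
    have c: "\<not> cv (fw ?E k i k) (A i k) \<le> 1" "\<not> cv (fw ?E k k j) (A k j) \<le> 1" "cv (fw ?E k i j) (A i j) \<le> 1"
      using True e1 e2 e3 by auto
    have v: "cv (fw ?E k i j) (A i j) + 2 = Sm A k i (Suc j) i j"
    proof -
      have "A i j \<noteq> 2" using True fw_Ed by blast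
      then have "A i j < 2" using Ab \<open>i < n\<close> jn by force
      then show ?thesis using True unfolding Sm_next_cur cv_def by simp
    qed
    have rg2: "regn (M(ad B n i j := cv (fw ?E k i j) (A i j) + 2)) B n (Sm A k i (Suc j))"
      by (rule regn_cell[where G = "Sm A k i (Suc j)", OF \<open>i < n\<close> jn rg v[symmetric]]) (auto simp: Sm_other)
    show ?thesis
      apply (rule wp_step)
      apply (simp add: ex r nj lk kj ij c ad_plus B ad_reg1 ad_reg2 del: One_nat_def)
      apply (rule wp_done)
       apply (simp add: stops_mem)
      apply (simp del: One_nat_def)
      apply (rule fin)
      using B apply (simp_all add: r ad_reg1 ad_reg2 regn_reg regn_regs_cell del: One_nat_def)
      using rg2 apply simp
      done
  next
    case False
    have sm: "fw ?E (Suc k) i j = fw ?E k i j" using False by auto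
    note rgs = same[OF sm]
    show ?thesis
    proof (cases "fw ?E k i k")
      case f1: False
      have c: "cv (fw ?E k i k) (A i k) \<le> 1" using e1 f1 by simp
      show ?thesis
      apply (rule wp_step)
      apply (simp add: ex r nj lk kj ij c ad_plus B ad_reg1 ad_reg2 del: One_nat_def)
      apply (rule wp_done)
       apply (simp add: stops_mem)
      apply (simp del: One_nat_def)
      apply (rule fin)
      using B apply (simp_all add: r ad_reg1 ad_reg2 regn_reg rgs del: One_nat_def)
      done
    next
      case t1: True
      show ?thesis
      proof (cases "fw ?E k k j")
        case f2: False
        have c: "\<not> cv (fw ?E k i k) (A i k) \<le> 1" "cv (fw ?E k k j) (A k j) \<le> 1" using e1 e2 t1 f2 by auto
        show ?thesis
      apply (rule wp_step)
      apply (simp add: ex r nj lk kj ij c ad_plus B ad_reg1 ad_reg2 del: One_nat_def)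
      apply (rule wp_done)
       apply (simp add: stops_mem)
      apply (simp del: One_nat_def)
      apply (rule fin)
      using B apply (simp_all add: r ad_reg1 ad_reg2 regn_reg rgs del: One_nat_def)
      done
      next
        case t2: True
        then have t3: "fw ?E k i j" using False t1 by auto
        have c: "\<not> cv (fw ?E k i k) (A i k) \<le> 1" "\<not> cv (fw ?E k k j) (A k j) \<le> 1" "\<not> cv (fw ?E k i j) (A i j) \<le> 1"
          using e1 e2 e3 t1 t2 t3 by auto
        show ?thesis
      apply (rule wp_step)
      apply (simp add: ex r nj lk kj ij c ad_plus B ad_reg1 ad_reg2 del: One_nat_def)
      apply (rule wp_done)
       apply (simp add: stops_mem)
      apply (simp del: One_nat_def)
      apply (rule fin)
      using B apply (simp_all add: r ad_reg1 ad_reg2 regn_reg rgs del: One_nat_def)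
      done
      qed
    qed
  qed
qed


lemma J_exit:
  assumes inv: "JInv A n B k i n M"
  shows "WP (125, M) (\<lambda>t s. t \<le> 2 \<and> fst s = 145 \<and> JInv A n B k i n (snd s))"
proof -
  have r: "M 0 = n" "M 13 = n" and B: "32 \<le> B" using inv unfolding JInv_def by auto
  show ?thesis
    apply (rule wp_step)
    apply (simp add: ex r del: One_nat_def)
    apply (rule wp_done)
     apply (simp add: stops_mem)
    using inv B unfolding JInv_def by (simp add: regn_reg del: One_nat_def)
qed

lemma J_loop:
  assumes Ab: "\<forall>a<n. \<forall>b<n. A a b \<le> 2" and inv: "JInv A n B k i 0 M"
  shows "WP (125, M) (\<lambda>t s. t \<le> n * 19 + 2 \<and> fst s = 145 \<and> JInv A n B k i n (snd s))"
  using wp_loop[where Inv = "JInv A n B k i" and N = n and c = 0 and L = 125 and T = 19 and T' = 2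
     and Post = "\<lambda>s. fst s = 145 \<and> JInv A n B k i n (snd s)", OF J_body[OF _ _ Ab] J_exit] inv by simp

definition IInv :: "(nat \<Rightarrow> nat \<Rightarrow> nat) \<Rightarrow> nat \<Rightarrow> nat \<Rightarrow> nat \<Rightarrow> nat \<Rightarrow> (nat \<Rightarrow> nat) \<Rightarrow> bool" where
  "IInv A n B k i M \<longleftrightarrow> M 0 = n \<and> M 6 = B \<and> M 10 = 1 \<and> M 11 = k \<and> M 12 = i \<and>
     M 14 = ad B n k 0 \<and> M 15 = ad B n i 0 \<and> k < n \<and> 32 \<le> B \<and> regn M B n (Sm A k i 0)"

lemma I_pre:
  assumes "i < n" and inv: "IInv A n B k i M"
  shows "WP (122, M) (\<lambda>t s. t \<le> 3 \<and> fst s = 125 \<and> JInv A n B k i 0 (snd s))"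
proof -
  have r: "M 0 = n" "M 12 = i" and B: "32 \<le> B" and ni: "\<not> n \<le> i" using inv assms(1) unfolding IInv_def by auto
  show ?thesis
    apply (rule wp_step)
    apply (simp add: ex r ni del: One_nat_def)
    apply (rule wp_done)
     apply (simp add: stops_mem)
    using inv B assms(1) unfolding IInv_def JInv_def by (simp add: regn_reg del: One_nat_def)
qed

lemma I_post:
  assumes inv: "JInv A n B k i n M"
  shows "WP (145, M) (\<lambda>t s. t \<le> 3 \<and> fst s = 122 \<and> IInv A n B k (Suc i) (snd s))"
proof -
  have r: "M 0 = n" "M 10 = 1" "M 12 = i" "M 15 = ad B n i 0" and B: "32 \<le> B"
    and rg: "regn M B n (Sm A k i n)" using inv unfolding JInv_def by auto
  have rg2: "regn M B n (Sm A k (Suc i) 0)" using rg by (rule regn_same) (simp add: Sm_row_end)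
  show ?thesis
    apply (rule wp_step)
    apply (simp add: ex r del: One_nat_def)
    apply (rule wp_done)
     apply (simp add: stops_mem)
    using inv B rg2 unfolding IInv_def JInv_def by (simp add: regn_reg ad_plus_n del: One_nat_def)
qed

lemma I_body:
  assumes Ab: "\<forall>a<n. \<forall>b<n. A a b \<le> 2" and i: "i < n" and inv: "IInv A n B k i M"
  shows "WP (122, M) (\<lambda>t s. t \<le> n * 19 + 8 \<and> fst s = 122 \<and> IInv A n B k (Suc i) (snd s))"
proof -
  note s1 = wp_seq[OF I_pre[OF i inv] J_loop[OF Ab]]
  note s2 = wp_seq[OF s1 I_post]
  show ?thesis using s2 by (rule wp_mono) auto
qed

lemma I_exit:
  assumes inv: "IInv A n B k n M"
  shows "WP (122, M) (\<lambda>t s. t \<le> 2 \<and> fst s = 148 \<and> IInv A n B k n (snd s))"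
proof -
  have r: "M 0 = n" "M 12 = n" and B: "32 \<le> B" using inv unfolding IInv_def by auto
  show ?thesis
    apply (rule wp_step)
    apply (simp add: ex r del: One_nat_def)
    apply (rule wp_done)
     apply (simp add: stops_mem)
    using inv B unfolding IInv_def by (simp add: regn_reg del: One_nat_def)
qed

lemma I_loop:
  assumes Ab: "\<forall>a<n. \<forall>b<n. A a b \<le> 2" and inv: "IInv A n B k 0 M"
  shows "WP (122, M) (\<lambda>t s. t \<le> n * (n * 19 + 8) + 2 \<and> fst s = 148 \<and> IInv A n B k n (snd s))"
  using wp_loop[where Inv = "IInv A n B k" and N = n and c = 0 and L = 122 and T = "n * 19 + 8" and T' = 2
     and Post = "\<lambda>s. fst s = 148 \<and> IInv A n B k n (snd s)", OF I_body[OF Ab] I_exit] inv by simp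

definition KInv :: "(nat \<Rightarrow> nat \<Rightarrow> nat) \<Rightarrow> nat \<Rightarrow> nat \<Rightarrow> nat \<Rightarrow> (nat \<Rightarrow> nat) \<Rightarrow> bool" where
  "KInv A n B k M \<longleftrightarrow> M 0 = n \<and> M 6 = B \<and> M 10 = 1 \<and> M 11 = k \<and>
     M 14 = ad B n k 0 \<and> 32 \<le> B \<and> regn M B n (Sm A k 0 0)"

lemma ad00: "B + 1 = ad B n 0 0" unfolding ad_def by simp

lemma K_pre:
  assumes "k < n" and inv: "KInv A n B k M"
  shows "WP (118, M) (\<lambda>t s. t \<le> 4 \<and> fst s = 122 \<and> IInv A n B k 0 (snd s))"
proof -
  have r: "M 0 = n" "M 11 = k" "M 6 = B" "M 10 = 1" and B: "32 \<le> B" and nk: "\<not> n \<le> k"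
    using inv assms(1) unfolding KInv_def by auto
  show ?thesis
    apply (rule wp_step)
    apply (simp add: ex r nk del: One_nat_def)
    apply (rule wp_done)
     apply (simp add: stops_mem)
    using inv B assms(1) unfolding IInv_def KInv_def by (simp add: regn_reg ad00 del: One_nat_def)
qed

lemma K_post:
  assumes inv: "IInv A n B k n M"
  shows "WP (148, M) (\<lambda>t s. t \<le> 3 \<and> fst s = 118 \<and> KInv A n B (Suc k) (snd s))"
proof -
  have r: "M 0 = n" "M 10 = 1" "M 11 = k" "M 14 = ad B n k 0" and B: "32 \<le> B"
    and rg: "regn M B n (Sm A k n 0)" using inv unfolding IInv_def by auto
  have rg2: "regn M B n (Sm A (Suc k) 0 0)" using rg by (rule regn_same) (simp add: Sm_k_end)
  show ?thesis
    apply (rule wp_step)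
    apply (simp add: ex r del: One_nat_def)
    apply (rule wp_done)
     apply (simp add: stops_mem)
    using inv B rg2 unfolding IInv_def KInv_def by (simp add: regn_reg ad_plus_n del: One_nat_def)
qed

lemma K_body:
  assumes Ab: "\<forall>a<n. \<forall>b<n. A a b \<le> 2" and k: "k < n" and inv: "KInv A n B k M"
  shows "WP (118, M) (\<lambda>t s. t \<le> n * (n * 19 + 8) + 9 \<and> fst s = 118 \<and> KInv A n B (Suc k) (snd s))"
proof -
  note s1 = wp_seq[OF K_pre[OF k inv] I_loop[OF Ab]]
  note s2 = wp_seq[OF s1 K_post]
  show ?thesis using s2 by (rule wp_mono) auto
qed

lemma K_exit:
  assumes inv: "KInv A n B n M"
  shows "WP (118, M) (\<lambda>t s. t \<le> 2 \<and> fst s = 151 \<and> KInv A n B n (snd s))"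
proof -
  have r: "M 0 = n" "M 11 = n" and B: "32 \<le> B" using inv unfolding KInv_def by auto
  show ?thesis
    apply (rule wp_step)
    apply (simp add: ex r del: One_nat_def)
    apply (rule wp_done)
     apply (simp add: stops_mem)
    using inv B unfolding KInv_def by (simp add: regn_reg del: One_nat_def)
qed

lemma K_loop:
  assumes Ab: "\<forall>a<n. \<forall>b<n. A a b \<le> 2" and inv: "KInv A n B 0 M"
  shows "WP (118, M) (\<lambda>t s. t \<le> n * (n * (n * 19 + 8) + 9) + 2 \<and> fst s = 151 \<and> KInv A n B n (snd s))"
  using wp_loop[where Inv = "KInv A n B" and N = n and c = 0 and L = 118 and T = "n * (n * 19 + 8) + 9" and T' = 2
     and Post = "\<lambda>s. fst s = 151 \<and> KInv A n B n (snd s)", OF K_body[OF Ab] K_exit] inv by simp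

lemma fw_setup:
  assumes inv: "Init I n M"
  shows "WP (115, M) (\<lambda>t s. t \<le> 3 \<and> fst s = 118 \<and> KInv (\<lambda>i j. I (1 + i * n + j)) n (n * n + 32) 0 (snd s))"
proof -
  have r: "M 0 = n" "M 6 = n * n + 32" and rg: "regn M (n * n + 32) n (\<lambda>i j. I (1 + i * n + j))"
    using inv unfolding Init_def by auto
  have rg2: "regn M (n * n + 32) n (Sm (\<lambda>i j. I (1 + i * n + j)) 0 0 0)"
    using rg by (rule regn_same) (simp add: Sm_init)
  have B: "32 \<le> n * n + 32" by simp
  show ?thesis
    apply (rule wp_step)
    apply (simp add: ex r del: One_nat_def)
    apply (rule wp_done)
     apply (simp add: stops_mem)
    using rg2 B r unfolding KInv_def by (simp add: regn_reg ad00[symmetric] del: One_nat_def)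
qed


definition CInv :: "(nat \<Rightarrow> nat) \<Rightarrow> nat \<Rightarrow> nat \<Rightarrow> nat \<Rightarrow> (nat \<Rightarrow> nat) \<Rightarrow> bool" where
  "CInv G n B c M \<longleftrightarrow> M 10 = 1 \<and> M 14 = B + 1 + n * n \<and> M 16 = B + 1 + c \<and>
     M 19 = (if \<exists>a<c. G a = 3 then 0 else 1) \<and> (\<forall>a<n * n. M (B + 1 + a) = G a) \<and> 32 \<le> B"

lemma C_body:
  assumes c: "c < n * n" and inv: "CInv G n B c M" and G3: "\<forall>a<n * n. G a \<le> 3"
  shows "WP (153, M) (\<lambda>t s. t \<le> 9 \<and> fst s = 153 \<and> CInv G n B (Suc c) (snd s))"
proof -
  define p where "p = B + 1 + c"
  define e where "e = B + 1 + n * n"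
  have r: "M 10 = 1" "M 14 = e" "M 16 = p" and B: "32 \<le> B"
    and mem: "\<forall>a<n * n. M (B + 1 + a) = G a" using inv unfolding CInv_def p_def e_def by auto
  have m19: "M 19 = (if \<exists>a<c. G a = 3 then 0 else 1)" using inv unfolding CInv_def by auto
  have ep: "\<not> e \<le> p" using c unfolding e_def p_def by simp
  have ld: "M p = G c" using mem c unfolding p_def by auto
  have pne: "p \<noteq> 16" "p \<noteq> 17" "p \<noteq> 18" "p \<noteq> 19" "p \<noteq> 10" "p \<noteq> 14" using B unfolding p_def by auto
  have p1: "p + 1 = B + 1 + Suc c" unfolding p_def by simp
  have ex3: "(\<exists>a<Suc c. G a = 3) \<longleftrightarrow> (\<exists>a<c. G a = 3) \<or> G c = 3" by (auto simp: less_Suc_eq)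
  show ?thesis
  proof (cases "G c = 3")
    case True
    have g: "\<not> G c \<le> 2" using True by simp
    show ?thesis
      apply (rule wp_step)
      apply (simp add: ex r ep ld pne g del: One_nat_def)
      apply (rule wp_done)
       apply (simp add: stops_mem)
      using inv B pne p1 True unfolding CInv_def by (simp add: ex3 del: One_nat_def)
  next
    case False
    have g: "G c \<le> 2" using False G3 c by force
    show ?thesis
      apply (rule wp_step)
      apply (simp add: ex r ep ld pne g del: One_nat_def)
      apply (rule wp_done)
       apply (simp add: stops_mem)
      using inv B pne p1 False m19 unfolding CInv_def by (simp add: ex3 del: One_nat_def)
  qed
qed

lemma C_exit:
  assumes inv: "CInv G n B (n * n) M"
  shows "WP (153, M) (\<lambda>t s. t \<le> 4 \<and> fst s = 164 \<and> snd s 0 = (if \<exists>a<n * n. G a = 3 then 0 else 1))"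
proof -
  define p where "p = B + 1 + n * n"
  have r: "M 14 = p" "M 16 = p" using inv unfolding CInv_def p_def by auto
  have m19: "M 19 = (if \<exists>a<n * n. G a = 3 then 0 else 1)" using inv unfolding CInv_def by auto
  show ?thesis
    apply (rule wp_step)
    apply (simp add: ex r del: One_nat_def)
    apply (intro conjI impI; rule wp_done; simp add: stops_mem m19 del: One_nat_def)
    done
qed

lemma C_loop:
  assumes G3: "\<forall>a<n * n. G a \<le> 3" and inv: "CInv G n B 0 M"
  shows "WP (153, M) (\<lambda>t s. t \<le> (n * n) * 9 + 4 \<and> fst s = 164 \<and> snd s 0 = (if \<exists>a<n * n. G a = 3 then 0 else 1))"
  using wp_loop[where Inv = "CInv G n B" and N = "n * n" and c = 0 and L = 153 and T = 9 and T' = 4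
     and Post = "\<lambda>s. fst s = 164 \<and> snd s 0 = (if \<exists>a<n * n. G a = 3 then 0 else 1)", OF C_body[OF _ _ G3] C_exit] inv by simp

lemma ad_divmod: "a < n * n \<Longrightarrow> ad B n (a div n) (a mod n) = B + 1 + a"
  unfolding ad_def by simp

lemma C_setup:
  assumes inv: "KInv A n B n M"
  shows "WP (151, M) (\<lambda>t s. t \<le> 2 \<and> fst s = 153 \<and> CInv (\<lambda>a. Sm A n 0 0 (a div n) (a mod n)) n B 0 (snd s))"
proof -
  have r: "M 6 = B" "M 10 = 1" "M 14 = ad B n n 0" and B: "32 \<le> B" and rg: "regn M B n (Sm A n 0 0)"
    using inv unfolding KInv_def by auto
  have mem: "\<forall>a<n * n. M (B + 1 + a) = Sm A n 0 0 (a div n) (a mod n)"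
  proof (intro allI impI)
    fix a assume a: "a < n * n"
    then have n0: "0 < n" by (cases n) auto
    have "a div n < n" using a by (simp add: less_mult_imp_div_less)
    moreover have "a mod n < n" using n0 by simp
    ultimately show "M (B + 1 + a) = Sm A n 0 0 (a div n) (a mod n)"
      using regn_get[OF rg] ad_divmod[OF a] by metis
  qed
  have e: "ad B n n 0 = B + 1 + n * n" unfolding ad_def by simp
  show ?thesis
    apply (rule wp_step)
    apply (simp add: ex r del: One_nat_def)
    apply (rule wp_done)
     apply (simp add: stops_mem)
    using mem B r e unfolding CInv_def by (simp add: ad_reg1 ad_reg2 del: One_nat_def)
qed

lemma cv3: "v \<le> 2 \<Longrightarrow> cv f v = 3 \<longleftrightarrow> f \<and> v = 1"
  unfolding cv_def by auto

lemma cv_le3: "v \<le> 2 \<Longrightarrow> cv f v \<le> 3"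
  unfolding cv_def by auto

lemma Sm_final: "Sm A n 0 0 a b = cv (fw (Ed A) n a b) (A a b)"
  unfolding Sm_def by simp

lemma conflict_equiv:
  assumes Ab: "\<forall>a<n. \<forall>b<n. A a b \<le> 2"
  shows "(\<exists>a<n * n. Sm A n 0 0 (a div n) (a mod n) = 3) \<longleftrightarrow> (\<exists>i<n. \<exists>j<n. A i j = 1 \<and> fw (Ed A) n i j)"
proof
  assume "\<exists>a<n * n. Sm A n 0 0 (a div n) (a mod n) = 3"
  then obtain a where a: "a < n * n" "Sm A n 0 0 (a div n) (a mod n) = 3" by blast
  then have n0: "0 < n" by (cases n) auto
  have i: "a div n < n" using a by (simp add: less_mult_imp_div_less)
  have j: "a mod n < n" using n0 by simp
  have "A (a div n) (a mod n) = 1 \<and> fw (Ed A) n (a div n) (a mod n)"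
    using a(2) cv3[of "A (a div n) (a mod n)"] Ab i j unfolding Sm_final by auto
  then show "\<exists>i<n. \<exists>j<n. A i j = 1 \<and> fw (Ed A) n i j" using i j by blast
next
  assume "\<exists>i<n. \<exists>j<n. A i j = 1 \<and> fw (Ed A) n i j"
  then obtain i j where ij: "i < n" "j < n" "A i j = 1" "fw (Ed A) n i j" by blast
  define a where "a = i * n + j"
  have a: "a < n * n" using idx_le[OF ij(1,2)] unfolding a_def by simp
  have "a div n = i" "a mod n = j" using ij unfolding a_def by auto
  then have "Sm A n 0 0 (a div n) (a mod n) = 3" using ij unfolding Sm_final cv_def by simp
  then show "\<exists>a<n * n. Sm A n 0 0 (a div n) (a mod n) = 3" using a by blast
qed

definition tbound :: "nat \<Rightarrow> nat" where
  "tbound n = 13 + (n * 4 + 1) + 5 + ((n * n - 5) * 8 + 3) + 5 + 13 + 13 + 13 + 13 + 3 +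
     (n * (n * (n * 19 + 8) + 9) + 2) + 2 + ((n * n) * 9 + 4)"

lemma whole:
  assumes I1: "I 1 = 0" and I0: "I 0 = n" and Ile: "\<forall>a>0. I a \<le> 2"
  shows "WP (0, I) (\<lambda>t s. t \<le> tbound n \<and> fst s = 164 \<and>
    snd s 0 = (if \<exists>i<n. \<exists>j<n. I (1 + i * n + j) = 1 \<and> fw (Ed (\<lambda>i j. I (1 + i * n + j))) n i j then 0 else 1))"
proof -
  let ?A = "\<lambda>i j. I (1 + i * n + j)"
  have Ab: "\<forall>a<n. \<forall>b<n. ?A a b \<le> 2" using Ile by simp
  have G3: "\<forall>a<n * n. Sm ?A n 0 0 (a div n) (a mod n) \<le> 3" using Ile unfolding Sm_final by (simp add: cv_le3)
  note s1 = wp_seq[OF init[OF I1 I0 Ile] fw_setup]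
  note s2 = wp_seq[OF s1 K_loop[OF Ab]]
  note s3 = wp_seq[OF s2 C_setup]
  note s4 = wp_seq[OF s3 C_loop[OF G3]]
  show ?thesis using s4 apply (rule wp_mono) using conflict_equiv[OF Ab] unfolding tbound_def by auto
qed


lemma tbound_le: "1 \<le> n \<Longrightarrow> tbound n \<le> 200 * n ^ 3 + 200"
proof -
  assume n: "1 \<le> n"
  have a: "n \<le> n * n * n" using n by (metis le_square mult.assoc mult_le_mono1 mult_1 le_trans)
  have b: "n * n \<le> n * n * n" using n by simp
  have c: "n * n - 5 \<le> n * n" by simp
  have d: "n * (n * (n * 19 + 8) + 9) = 19 * (n * n * n) + 8 * (n * n) + 9 * n" by (simp add: algebra_simps)
  have e: "n ^ 3 = n * n * n" by (simp add: power3_eq_cube)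
  show ?thesis unfolding tbound_def d e using a b c by linarith
qed

theorem proposition4p2:
  "\<exists>(prog :: instr list) (c :: nat) (k :: nat).
     \<forall>(V :: 'a set) (xt :: ('a \<times> 'a) \<rightharpoonup> nat) (e :: nat \<Rightarrow> 'a).
       finite V \<and> V \<noteq> {} \<and> dom xt \<subseteq> P V \<and> ran xt \<subseteq> {0, 1} \<and>
       bij_betw e {0..<card V} V \<longrightarrow>
       (let s = run prog (c * card V ^ k + c) (input_mem (card V) e xt)
        in halted prog s \<and>
           snd s 0 = (if completions V xt \<noteq> {} then 1 else 0))"
proof (intro exI allI impI)
  fix V :: "'a set" and xt :: "('a \<times> 'a) \<rightharpoonup> nat" and e :: "nat \<Rightarrow> 'a"
  assume h: "finite V \<and> V \<noteq> {} \<and> dom xt \<subseteq> P V \<and> ran xt \<subseteq> {0, 1} \<and> bij_betw e {0..<card V} V"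
  define n where "n = card V"
  define I where "I = input_mem n e xt"
  have n1: "1 \<le> n" using h unfolding n_def by (simp add: Suc_leI card_gt_0_iff)
  have I0: "I 0 = n" unfolding I_def input_mem_def by simp
  have I1: "I 1 = 0"
  proof -
    have "xt (e 0, e 0) = None" using h unfolding P_def by auto
    then show ?thesis unfolding I_def input_mem_def using n1 by simp
  qed
  have Ile: "\<forall>a>0. I a \<le> 2"
  proof (intro allI impI)
    fix a :: nat assume a0: "0 < a"
    have "\<And>p v. xt p = Some v \<Longrightarrow> v \<le> 1"
    proof -
      fix p v assume "xt p = Some v" then have "v \<in> ran xt" by (metis ranI)
      then show "v \<le> 1" using h by auto
    qed
    then show "I a \<le> 2" unfolding I_def input_mem_def using a0 by (auto split: option.splits)
  qed
  have W: "WP (0, I) (\<lambda>t s. t \<le> tbound n \<and> fst s = 164 \<and>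
    snd s 0 = (if \<exists>i<n. \<exists>j<n. I (1 + i * n + j) = 1 \<and> fw (Ed (\<lambda>i j. I (1 + i * n + j))) n i j then 0 else 1))"
    by (rule whole[OF I1 I0 Ile])
  then obtain t where t: "t \<le> tbound n" "fst ((step prog ^^ t) (0, I)) = 164"
    "snd ((step prog ^^ t) (0, I)) 0 = (if \<exists>i<n. \<exists>j<n. I (1 + i * n + j) = 1 \<and> fw (Ed (\<lambda>i j. I (1 + i * n + j))) n i j then 0 else 1)"
    unfolding wp_def by blast
  define st where "st = (step prog ^^ t) (0, I)"
  have hs: "halted prog st" using t(2) unfolding st_def halted_def by (simp add: prog_nth)
  define T where "T = 200 * n ^ 3 + 200"
  have tT: "t \<le> T" using t(1) tbound_le[OF n1] unfolding T_def by simp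
  have runT: "run prog T I = st"
  proof -
    have "T = (T - t) + t" using tT by simp
    then have "(step prog ^^ T) (0, I) = (step prog ^^ (T - t)) ((step prog ^^ t) (0, I))"
      by (metis funpow_add o_apply)
    then show ?thesis unfolding run_def st_def using halted_funpow hs unfolding st_def by metis
  qed
  have Aeq: "\<And>i j. I (1 + i * n + j) = Amat n e xt i j" unfolding I_def Amat_def by simp
  have EdA: "Ed (Amat n e xt) = (\<lambda>i j. Amat n e xt i j = 2)" unfolding Ed_def by (intro ext) simp
  have feas: "completions V xt \<noteq> {} \<longleftrightarrow> \<not> (\<exists>i<n. \<exists>j<n. Amat n e xt i j = 1 \<and> fw (\<lambda>i j. Amat n e xt i j = 2) n i j)"
    using feasible_iff[of xt V e] h unfolding n_def by blast
  have out: "snd st 0 = (if completions V xt \<noteq> {} then 1 else 0)"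
  proof -
    have "snd st 0 = (if \<exists>i<n. \<exists>j<n. Amat n e xt i j = 1 \<and> fw (Ed (Amat n e xt)) n i j then 0 else 1)"
      using t(3) unfolding st_def[symmetric] Aeq .
    then show ?thesis unfolding EdA feas by auto
  qed
  show "let s = run prog (200 * card V ^ 3 + 200) (input_mem (card V) e xt)
        in halted prog s \<and> snd s 0 = (if completions V xt \<noteq> {} then 1 else 0)"
    using runT hs out unfolding T_def n_def I_def Let_def by simp
qed

end
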